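(* Let $G\le\mathrm{O}(d)$ be finite. The following are equivalent: (a) $|C([x],[y])|=1$ for all $x,y\in\mathbb{R}^d$; (b) for every $x\in P(G)$, $Q_x=P(G)$; (c) $G$ is a reflection group; (d) $\chi(G)=1$.
   Context: For $x\in\mathbb{R}^d$, $[x]:=\{gx:g\in G\}$; $\mathbb{R}^d/G$ has the quotient metric $d([x],[y]):=\min_{p\in[x],q\in[y]}\|p-q\|$. In a metric space, a curve $\gamma:[0,L]\to M$ with $L\ge0$ is a minimal geodesic if $d(\gamma(s),\gamma(t))=|s-t|$ for all $s,t$; $C(a,b)$ is the set of minimal geodesics with $\gamma(0)=a$, $\gamma(L)=b$. The open Voronoi cell $V_x$ is the set of $y$ such that $x$ is the unique maximizer of $\langle p,y\rangle$ over $p\in[x]$; $Q_x:=\bigcup_{p\in[x]}V_p$. $P(G):=\{x:\mathrm{stab}_G(x)=\{\mathrm{id}\}\}$, $S(x,y):=\{q\in[y]:V_q\cap V_x\ne\varnothing\}$, $\chi(G):=\max_{x,y\in P(G)}|S(x,y)|$. A reflection group is a finite subgroup of $\mathrm{O}(d)$ generated by orthogonal reflections across hyperplanes (the trivial group included). *)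

theory Defs
  imports "HOL-Analysis.Analysis"
begin

text \<open>Groups G are sets of maps 'a \<Rightarrow> 'a on a Euclidean space 'a (so d = DIM('a)).\<close>

definition orbit :: "('a \<Rightarrow> 'a) set \<Rightarrow> 'a \<Rightarrow> 'a set" where
  "orbit G x = (\<lambda>g. g x) ` G"

definition quot_space :: "('a \<Rightarrow> 'a) set \<Rightarrow> 'a set set" where
  "quot_space G = range (orbit G)"

definition qdist :: "'a::real_normed_vector set \<Rightarrow> 'a set \<Rightarrow> real" where
  "qdist X Y = Inf {norm (p - q) | p q. p \<in> X \<and> q \<in> Y}"

text \<open>C(A,B): minimal geodesics gamma : [0,L] \<rightarrow> R^d/G from A to B, represented as pairs
  (L, gamma) where gamma is extended by the non-point {} outside [0,L].\<close>
definition min_geodesics ::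
  "('a::real_normed_vector \<Rightarrow> 'a) set \<Rightarrow> 'a set \<Rightarrow> 'a set \<Rightarrow> (real \<times> (real \<Rightarrow> 'a set)) set" where
  "min_geodesics G A B = {(L, \<gamma>). 0 \<le> L
      \<and> (\<forall>t\<in>{0..L}. \<gamma> t \<in> quot_space G)
      \<and> (\<forall>t. t \<notin> {0..L} \<longrightarrow> \<gamma> t = {})
      \<and> (\<forall>s\<in>{0..L}. \<forall>t\<in>{0..L}. qdist (\<gamma> s) (\<gamma> t) = \<bar>s - t\<bar>)
      \<and> \<gamma> 0 = A \<and> \<gamma> L = B}"

definition voronoi :: "('a::real_inner \<Rightarrow> 'a) set \<Rightarrow> 'a \<Rightarrow> 'a set" where
  "voronoi G x = {y. \<forall>p\<in>orbit G x. p \<noteq> x \<longrightarrow> inner p y < inner x y}"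

definition Qcell :: "('a::real_inner \<Rightarrow> 'a) set \<Rightarrow> 'a \<Rightarrow> 'a set" where
  "Qcell G x = (\<Union>p\<in>orbit G x. voronoi G p)"

definition principal :: "('a \<Rightarrow> 'a) set \<Rightarrow> 'a set" where
  "principal G = {x. {g\<in>G. g x = x} = {id}}"

definition Sset :: "('a::real_inner \<Rightarrow> 'a) set \<Rightarrow> 'a \<Rightarrow> 'a \<Rightarrow> 'a set" where
  "Sset G x y = {q\<in>orbit G y. voronoi G q \<inter> voronoi G x \<noteq> {}}"

definition chi :: "('a::real_inner \<Rightarrow> 'a) set \<Rightarrow> nat" where
  "chi G = Max {card (Sset G x y) | x y. x \<in> principal G \<and> y \<in> principal G}"

definition reflection :: "'a::real_inner \<Rightarrow> 'a \<Rightarrow> 'a" where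
  "reflection v = (\<lambda>x. x - (2 * inner x v / inner v v) *\<^sub>R v)"

text \<open>Group generated by a set R of maps (for involutions, closure under composition suffices).\<close>
inductive_set generated :: "('a \<Rightarrow> 'a) set \<Rightarrow> ('a \<Rightarrow> 'a) set" for R where
  gen_id: "id \<in> generated R"
| gen_step: "r \<in> R \<Longrightarrow> f \<in> generated R \<Longrightarrow> r \<circ> f \<in> generated R"

definition reflection_group :: "('a::real_inner \<Rightarrow> 'a) set \<Rightarrow> bool" where
  "reflection_group G \<longleftrightarrow>
     (\<exists>R. (\<forall>r\<in>R. \<exists>v. v \<noteq> 0 \<and> r = reflection v) \<and> G = generated R)"

end

theory Submission
  imports Defs
begin


section \<open>Reflections\<close>

lemma refl_apply: "reflection v x = x - (2 * (x \<bullet> v) / (v \<bullet> v)) *\<^sub>R v"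
  by (simp add: reflection_def)

lemma refl_linear: "linear (reflection v)"
  unfolding reflection_def
  by (intro linearI) (auto simp: algebra_simps inner_add_left inner_scaleR_left add_divide_distrib scaleR_add_left diff_divide_distrib)

lemma refl_selfadj: "reflection v x \<bullet> y = x \<bullet> reflection v y"
  by (simp add: refl_apply inner_diff_left inner_diff_right inner_commute algebra_simps)

lemma refl_invol: assumes "v \<noteq> 0" shows "reflection v (reflection v x) = x"
proof -
  have vv: "v \<bullet> v \<noteq> 0" using assms by simp
  show ?thesis using vv
    by (simp add: refl_apply inner_diff_left algebra_simps scaleR_diff_left)
qed

lemma refl_inner: assumes "v \<noteq> 0" shows "reflection v x \<bullet> reflection v y = x \<bullet> y"
  by (simp add: refl_selfadj refl_invol assms)

lemma refl_orth: assumes "v \<noteq> 0" shows "orthogonal_transformation (reflection v)"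
  using refl_linear refl_inner[OF assms] by (simp add: orthogonal_transformation_def)

lemma refl_fix: assumes "v \<noteq> 0" shows "reflection v x = x \<longleftrightarrow> x \<bullet> v = 0"
  using assms by (simp add: refl_apply)

lemma refl_scale: assumes "a \<noteq> 0" shows "reflection (a *\<^sub>R v) = reflection v"
  using assms by (auto simp: fun_eq_iff refl_apply power2_eq_square field_simps)

lemma refl_self: assumes "v \<noteq> 0" shows "reflection v v = - v"
  using assms by (simp add: refl_apply scaleR_2)

lemma refl_ne_id: assumes "v \<noteq> 0" shows "reflection v \<noteq> id"
proof
  assume "reflection v = id"
  then have "reflection v v = v" by simp
  with refl_self[OF assms] assms show False
    by (metis add.inverse_unique add_cancel_right_left eq_neg_iff_add_eq_0 scaleR_2 scaleR_eq_0_iff zero_neq_numeral)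
qed

lemma refl_neg: assumes "v \<noteq> 0" "reflection v u = - u" shows "u = ((u \<bullet> v) / (v \<bullet> v)) *\<^sub>R v"
proof -
  have "u - (2 * (u \<bullet> v) / (v \<bullet> v)) *\<^sub>R v = - u" using assms(2) by (simp add: refl_apply)
  then have "2 *\<^sub>R u = (2 * (u \<bullet> v) / (v \<bullet> v)) *\<^sub>R v" by (simp add: algebra_simps scaleR_2)
  then have "(1/2) *\<^sub>R (2 *\<^sub>R u) = (1/2) *\<^sub>R ((2 * (u \<bullet> v) / (v \<bullet> v)) *\<^sub>R v)" by simp
  then show ?thesis by simp
qed

lemma refl_diff: "x - reflection v x = (2 * (x \<bullet> v) / (v \<bullet> v)) *\<^sub>R v"
  by (simp add: refl_apply)

lemma orth_inv_apply:
  fixes g :: "'a::euclidean_space \<Rightarrow> 'a"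
  assumes "orthogonal_transformation g" shows "g (inv g x) = x" "inv g (g x) = x"
  using orthogonal_transformation_bij[OF assms]
  by (auto simp: bij_def surj_f_inv_f inv_f_f)

lemma refl_conj:
  fixes g :: "'a::euclidean_space \<Rightarrow> 'a"
  assumes g: "orthogonal_transformation g"
  shows "g \<circ> reflection v \<circ> inv g = reflection (g v)"
proof
  fix x
  have lin: "linear g" using g by (simp add: orthogonal_transformation_def)
  have i1: "inv g x \<bullet> v = x \<bullet> g v"
    by (metis g orth_inv_apply(1) orthogonal_transformation_def)
  have i2: "g v \<bullet> g v = v \<bullet> v" using g by (simp add: orthogonal_transformation_def)
  show "(g \<circ> reflection v \<circ> inv g) x = reflection (g v) x"
    by (simp add: refl_apply linear_diff[OF lin] linear_scale[OF lin] orth_inv_apply[OF g] i1 i2)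
qed

lemma refl_inv: assumes "v \<noteq> 0" shows "inv (reflection v) = reflection v"
  by (metis assms inv_unique_comp fun_eq_iff comp_apply id_apply refl_invol)



lemma strict_cs:
  fixes p q :: "'a::real_inner"
  assumes "norm p = norm q" "p \<noteq> q" shows "p \<bullet> q < q \<bullet> q"
proof -
  have "0 < (p - q) \<bullet> (p - q)" using assms(2) by simp
  moreover have "p \<bullet> p = q \<bullet> q" using assms(1) by (simp add: dot_square_norm)
  ultimately show ?thesis by (simp add: inner_diff_left inner_diff_right inner_commute)
qed

lemma exists_avoid:
  fixes U :: "'a::euclidean_space set"
  assumes "open U" "U \<noteq> {}" "finite NN" "\<forall>N\<in>NN. negligible N"
  shows "\<exists>x\<in>U. \<forall>N\<in>NN. x \<notin> N"
proof (rule ccontr)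
  assume "\<not> ?thesis"
  then have "U \<subseteq> \<Union>NN" by blast
  moreover have "negligible (\<Union>NN)" using assms(3,4) by blast
  ultimately have "negligible U" using negligible_subset by blast
  with open_not_negligible[OF assms(1,2)] show False by blast
qed

lemma negligible_hyp0: "(a::'a::euclidean_space) \<noteq> 0 \<Longrightarrow> negligible {x. a \<bullet> x = 0}"
  using negligible_hyperplane by blast

locale fgrp =
  fixes G :: "('a::euclidean_space \<Rightarrow> 'a) set"
  assumes fin: "finite G"
    and orth: "\<forall>g\<in>G. orthogonal_transformation g"
    and idG: "id \<in> G"
    and compG: "\<forall>f\<in>G. \<forall>g\<in>G. f \<circ> g \<in> G"
    and invG: "\<forall>g\<in>G. inv g \<in> G"
begin

lemma G_orth: "g \<in> G \<Longrightarrow> orthogonal_transformation g" using orth by blast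
lemma G_lin: "g \<in> G \<Longrightarrow> linear g" using orth by (simp add: orthogonal_transformation_def)
lemma G_inner: "g \<in> G \<Longrightarrow> g x \<bullet> g y = x \<bullet> y" using orth by (simp add: orthogonal_transformation_def)
lemma G_norm: "g \<in> G \<Longrightarrow> norm (g x) = norm x" using orth by (simp add: orthogonal_transformation)
lemma G_comp: "f \<in> G \<Longrightarrow> g \<in> G \<Longrightarrow> f \<circ> g \<in> G" using compG by blast
lemma G_inv: "g \<in> G \<Longrightarrow> inv g \<in> G" using invG by blast
lemma G_invr: "g \<in> G \<Longrightarrow> g (inv g x) = x" using orth_inv_apply G_orth by blast
lemma G_invl: "g \<in> G \<Longrightarrow> inv g (g x) = x" using orth_inv_apply G_orth by blast
lemma G_diff: "g \<in> G \<Longrightarrow> g (x - y) = g x - g y" using G_lin linear_diff by blast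
lemma G_add: "g \<in> G \<Longrightarrow> g (x + y) = g x + g y" using G_lin linear_add by blast
lemma G_scale: "g \<in> G \<Longrightarrow> g (a *\<^sub>R x) = a *\<^sub>R g x" using G_lin linear_scale by blast
lemma G_zero: "g \<in> G \<Longrightarrow> g 0 = 0" using G_lin linear_0 by blast
lemma G_inj: "g \<in> G \<Longrightarrow> g x = g y \<longleftrightarrow> x = y" by (metis G_invl)

lemma orbit_fin: "finite (orbit G x)" using fin by (simp add: orbit_def)
lemma orbit_self: "x \<in> orbit G x" unfolding orbit_def using idG by (metis id_apply image_eqI)
lemma orbit_act: "g \<in> G \<Longrightarrow> g x \<in> orbit G x" by (simp add: orbit_def)
lemma orbit_ne: "orbit G x \<noteq> {}" using orbit_self by blast
lemma orbit_memE: assumes "p \<in> orbit G x" obtains g where "g \<in> G" "p = g x"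
  using assms by (auto simp: orbit_def)
lemma orbit_gx: assumes "g \<in> G" shows "orbit G (g x) = orbit G x"
proof
  show "orbit G (g x) \<subseteq> orbit G x"
    using assms by (auto simp: orbit_def intro!: image_eqI[where x="_ \<circ> g"] G_comp)
  show "orbit G x \<subseteq> orbit G (g x)"
  proof
    fix p assume "p \<in> orbit G x"
    then obtain h where h: "h \<in> G" "p = h x" by (rule orbit_memE)
    have "p = (h \<circ> inv g) (g x)" using assms h by (simp add: G_invl)
    moreover have "h \<circ> inv g \<in> G" using h assms by (simp add: G_comp G_inv)
    ultimately show "p \<in> orbit G (g x)" using orbit_act by metis
  qed
qed
lemma orbit_eq: "p \<in> orbit G x \<Longrightarrow> orbit G p = orbit G x"
  by (metis orbit_gx orbit_memE)
lemma orbit_norm: "p \<in> orbit G x \<Longrightarrow> norm p = norm x"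
  by (metis G_norm orbit_memE)
lemma orbit_sym: "p \<in> orbit G x \<Longrightarrow> x \<in> orbit G p"
  using orbit_eq orbit_self by blast

lemma principal_iff: "x \<in> principal G \<longleftrightarrow> (\<forall>g\<in>G. g x = x \<longrightarrow> g = id)"
  using idG by (auto simp: principal_def)

lemma principal_act:
  assumes "g \<in> G" "x \<in> principal G" shows "g x \<in> principal G"
  unfolding principal_iff
proof (intro ballI impI)
  fix h assume h: "h \<in> G" "h (g x) = g x"
  have "(inv g \<circ> h \<circ> g) x = x" using h assms by (simp add: G_invl)
  then have "inv g \<circ> h \<circ> g = id" using assms h principal_iff by (meson G_comp G_inv)
  then have "g \<circ> (inv g \<circ> h \<circ> g) \<circ> inv g = g \<circ> inv g" by simp
  then show "h = id" using assms by (simp add: fun_eq_iff G_invr)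
qed

lemma principal_orbit: "x \<in> principal G \<Longrightarrow> p \<in> orbit G x \<Longrightarrow> p \<in> principal G"
  by (metis orbit_memE principal_act)

lemma principal_exists: "\<exists>x. x \<in> principal G"
proof -
  define w where "w g = (SOME w. g w \<noteq> w)" for g :: "'a \<Rightarrow> 'a"
  have w: "g (w g) \<noteq> w g" if "g \<noteq> id" for g
    using that unfolding w_def by (metis (mono_tags) eq_id_iff someI_ex)
  define NN where "NN = (\<lambda>g. {x. (g (w g) - w g) \<bullet> x = 0}) ` (G - {id})"
  have "finite NN" using fin by (simp add: NN_def)
  moreover have "\<forall>N\<in>NN. negligible N"
    using w by (auto simp: NN_def intro!: negligible_hyp0)
  ultimately obtain x where x: "\<forall>N\<in>NN. x \<notin> N"
    using exists_avoid[of UNIV NN] by auto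
  have "x \<in> principal G" unfolding principal_iff
  proof (intro ballI impI)
    fix g assume g: "g \<in> G" "g x = x"
    show "g = id"
    proof (rule ccontr)
      assume "g \<noteq> id"
      then have "x \<notin> {x. (g (w g) - w g) \<bullet> x = 0}" using x g by (auto simp: NN_def)
      moreover have "g (w g) \<bullet> x = w g \<bullet> x"
        using G_inner[OF g(1), of "w g" x] g(2) by simp
      ultimately show False by (simp add: inner_diff_left)
    qed
  qed
  then show ?thesis by blast
qed

subsection \<open>Voronoi cells\<close>

lemma vor_iff: "y \<in> voronoi G p \<longleftrightarrow> (\<forall>q\<in>orbit G p. q \<noteq> p \<longrightarrow> q \<bullet> y < p \<bullet> y)"
  by (simp add: voronoi_def)

lemma vor_self: "p \<in> voronoi G p"
  unfolding vor_iff using strict_cs orbit_norm by (metis orbit_eq orbit_self)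

lemma vor_open: "open (voronoi G p)"
proof -
  have "voronoi G p = (\<Inter>q\<in>{q\<in>orbit G p. q \<noteq> p}. {y. q \<bullet> y < p \<bullet> y})"
    by (auto simp: voronoi_def)
  moreover have "open {y. q \<bullet> y < p \<bullet> y}" for q :: 'a
    by (intro open_Collect_less continuous_intros)
  ultimately show ?thesis using orbit_fin by (auto intro!: open_INT)
qed

lemma vor_convex: "convex (voronoi G p)"
proof (rule convexI)
  fix x y u v assume x: "x \<in> voronoi G p" and y: "y \<in> voronoi G p"
    and u: "0 \<le> (u::real)" and v: "0 \<le> v" and uv: "u + v = 1"
  show "u *\<^sub>R x + v *\<^sub>R y \<in> voronoi G p" unfolding vor_iff
  proof (intro ballI impI)
    fix q assume q: "q \<in> orbit G p" "q \<noteq> p"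
    have a: "q \<bullet> x < p \<bullet> x" "q \<bullet> y < p \<bullet> y" using x y q by (auto simp: vor_iff)
    show "q \<bullet> (u *\<^sub>R x + v *\<^sub>R y) < p \<bullet> (u *\<^sub>R x + v *\<^sub>R y)"
    proof (cases "u = 0")
      case True then show ?thesis using uv a by simp
    next
      case False
      then have "u * (q \<bullet> x) < u * (p \<bullet> x)" using u a by simp
      moreover have "v * (q \<bullet> y) \<le> v * (p \<bullet> y)" using v a by (simp add: mult_left_mono)
      ultimately show ?thesis by (simp add: inner_add_right)
    qed
  qed
qed

lemma vor_disj:
  assumes "q \<in> orbit G p" "y \<in> voronoi G p" "y \<in> voronoi G q" shows "q = p"
  using assms unfolding vor_iff by (metis less_asym orbit_eq orbit_self)

lemma vor_principal:
  assumes "x \<in> principal G" shows "voronoi G x \<subseteq> principal G"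
proof
  fix y assume y: "y \<in> voronoi G x"
  show "y \<in> principal G" unfolding principal_iff
  proof (intro ballI impI)
    fix g assume g: "g \<in> G" "g y = y"
    show "g = id"
    proof (rule ccontr)
      assume "g \<noteq> id"
      then have "g x \<noteq> x" using assms g principal_iff by blast
      then have "g x \<bullet> y < x \<bullet> y" using y orbit_act[OF g(1)] by (simp add: vor_iff)
      moreover have "g x \<bullet> y = x \<bullet> y" using G_inner[OF g(1), of x y] g(2) by simp
      ultimately show False by simp
    qed
  qed
qed

lemma Qcell_principal: "x \<in> principal G \<Longrightarrow> Qcell G x \<subseteq> principal G"
  unfolding Qcell_def using vor_principal principal_orbit by blast

lemma vor_act:
  assumes g: "g \<in> G" and y: "y \<in> voronoi G p" shows "g y \<in> voronoi G (g p)"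
  unfolding vor_iff
proof (intro ballI impI)
  fix q assume q: "q \<in> orbit G (g p)" "q \<noteq> g p"
  have "inv g q \<in> orbit G p"
    using q(1) g by (metis G_inv orbit_act orbit_eq orbit_gx)
  moreover have "inv g q \<noteq> p" using q(2) g G_invr by metis
  ultimately have "inv g q \<bullet> y < p \<bullet> y" using y by (simp add: vor_iff)
  moreover have "q \<bullet> g y = inv g q \<bullet> y" using G_inner[OF g, of "inv g q" y] G_invr[OF g, of q] by simp
  moreover have "g p \<bullet> g y = p \<bullet> y" using G_inner[OF g] by simp
  ultimately show "q \<bullet> g y < g p \<bullet> g y" by simp
qed

lemma Qcell_iff: "z \<in> Qcell G x \<longleftrightarrow> (\<exists>p\<in>orbit G x. z \<in> voronoi G p)"
  by (simp add: Qcell_def)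

subsection \<open>Quotient distance\<close>

lemma qdist_set: "{norm (p - q) | p q. p \<in> orbit G a \<and> q \<in> orbit G b} = (\<lambda>(p,q). norm (p - q)) ` (orbit G a \<times> orbit G b)"
  by auto

lemma qdist_fin: "finite {norm (p - q) | p q. p \<in> orbit G a \<and> q \<in> orbit G b}"
  unfolding qdist_set using orbit_fin by simp

lemma qdist_le: "p \<in> orbit G a \<Longrightarrow> q \<in> orbit G b \<Longrightarrow> qdist (orbit G a) (orbit G b) \<le> norm (p - q)"
  unfolding qdist_def by (rule cInf_lower) (auto intro: bdd_belowI[where m=0])

lemma qdist_attain: "\<exists>p\<in>orbit G a. \<exists>q\<in>orbit G b. qdist (orbit G a) (orbit G b) = norm (p - q)"
proof -
  let ?S = "{norm (p - q) | p q. p \<in> orbit G a \<and> q \<in> orbit G b}"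
  have ne: "?S \<noteq> {}" using orbit_self by blast
  have "qdist (orbit G a) (orbit G b) = Min ?S" unfolding qdist_def using cInf_eq_Min[OF qdist_fin ne] .
  moreover have "Min ?S \<in> ?S" using Min_in[OF qdist_fin ne] .
  ultimately show ?thesis by auto
qed

lemma qdist_attain2: "\<exists>g\<in>G. qdist (orbit G a) (orbit G b) = norm (a - g b)"
proof -
  obtain p q where pq: "p \<in> orbit G a" "q \<in> orbit G b" "qdist (orbit G a) (orbit G b) = norm (p - q)"
    using qdist_attain by blast
  obtain h where h: "h \<in> G" "p = h a" using pq(1) by (rule orbit_memE)
  obtain k where k: "k \<in> G" "q = k b" using pq(2) by (rule orbit_memE)
  have "norm (p - q) = norm (inv h (p - q))" using h G_inv G_norm by metis
  also have "inv h (p - q) = a - (inv h \<circ> k) b" using h k by (simp add: G_diff G_inv G_invl)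
  finally show ?thesis using pq h k by (metis G_comp G_inv)
qed

lemma qdist_nonneg: "0 \<le> qdist (orbit G a) (orbit G b)"
  using qdist_attain by (metis norm_ge_zero)

lemma qdist_sym: "qdist (orbit G a) (orbit G b) = qdist (orbit G b) (orbit G a)"
proof -
  have "{norm (p - q) | p q. p \<in> orbit G a \<and> q \<in> orbit G b} = {norm (p - q) | p q. p \<in> orbit G b \<and> q \<in> orbit G a}"
    by (auto, (metis norm_minus_commute)+)
  then show ?thesis by (simp add: qdist_def)
qed

lemma qdist_tri: "qdist (orbit G a) (orbit G c) \<le> qdist (orbit G a) (orbit G b) + qdist (orbit G b) (orbit G c)"
proof -
  obtain g where g: "g \<in> G" "qdist (orbit G a) (orbit G b) = norm (a - g b)" using qdist_attain2 by blast
  obtain h where h: "h \<in> G" "qdist (orbit G b) (orbit G c) = norm (b - h c)" using qdist_attain2 by blast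
  have "qdist (orbit G a) (orbit G c) \<le> norm (a - g (h c))"
    using qdist_le[OF orbit_self] orbit_act g h by (metis G_comp comp_apply)
  also have "\<dots> \<le> norm (a - g b) + norm (g b - g (h c))" by (rule norm_diff_triangle_le) auto
  also have "norm (g b - g (h c)) = norm (b - h c)" using g by (metis G_diff G_norm)
  finally show ?thesis using g h by simp
qed

lemma qdist_self: "qdist (orbit G a) (orbit G a) = 0"
  using qdist_le[OF orbit_self orbit_self, of a a] qdist_nonneg[of a a] by simp

end


lemma max_exists:
  fixes f :: "'b \<Rightarrow> real"
  assumes "finite S" "S \<noteq> {}" shows "\<exists>a\<in>S. \<forall>b\<in>S. f b \<le> f a"
proof -
  have "Max (f ` S) \<in> f ` S" using assms by simp
  then obtain a where "a \<in> S" "f a = Max (f ` S)" by (metis imageE)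
  then show ?thesis using assms by (metis Max_ge finite_imageI imageI)
qed

lemma pos_small:
  fixes f :: "'b \<Rightarrow> real"
  assumes "finite A" "\<forall>a\<in>A. 0 < f a" "0 < L"
  shows "\<exists>t>0. t \<le> L \<and> (\<forall>a\<in>A. t < f a)"
proof -
  define m where "m = Min (insert L (f ` A))"
  have m: "0 < m" using assms by (simp add: m_def)
  have "m \<le> L" "\<forall>a\<in>A. m \<le> f a" using assms by (auto simp: m_def)
  then show ?thesis using m by (intro exI[of _ "m/2"]) auto
qed

lemma norm_diff_eq_from_inner:
  fixes z p q :: "'a::real_inner"
  assumes "norm p = norm q" "p \<bullet> z = q \<bullet> z" shows "norm (z - p) = norm (z - q)"
proof -
  have "p \<bullet> p = q \<bullet> q" using assms(1) by (simp add: dot_square_norm)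
  then have "(z - p) \<bullet> (z - p) = (z - q) \<bullet> (z - q)"
    using assms(2) by (simp add: inner_diff_left inner_diff_right inner_commute)
  then show ?thesis by (simp add: norm_eq_sqrt_inner)
qed

lemma norm_diff_le_from_inner:
  fixes z p q :: "'a::real_inner"
  assumes "norm p = norm q" "p \<bullet> z \<le> q \<bullet> z" shows "norm (z - q) \<le> norm (z - p)"
proof -
  have "p \<bullet> p = q \<bullet> q" using assms(1) by (simp add: dot_square_norm)
  then have "(z - q) \<bullet> (z - q) \<le> (z - p) \<bullet> (z - p)"
    using assms(2) by (simp add: inner_diff_left inner_diff_right inner_commute)
  then show ?thesis by (simp add: norm_le)
qed

context fgrp begin

definition U where "U \<longleftrightarrow> (\<forall>x\<in>principal G. principal G \<subseteq> Qcell G x)"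

lemma B_iff_U: "(\<forall>x\<in>principal G. Qcell G x = principal G) \<longleftrightarrow> U"
  unfolding U_def using Qcell_principal by blast

lemma conn_vor:
  assumes S: "connected S" "S \<subseteq> (\<Union>p\<in>orbit G y. voronoi G p)"
    and p: "p0 \<in> orbit G y" "p1 \<in> orbit G y"
    and ab: "a \<in> S" "a \<in> voronoi G p0" "b \<in> S" "b \<in> voronoi G p1"
  shows "p0 = p1"
proof (rule ccontr)
  assume ne: "p0 \<noteq> p1"
  define e2 where "e2 = (\<Union>p\<in>orbit G y - {p0}. voronoi G p)"
  have o1: "open (voronoi G p0)" by (rule vor_open)
  have o2: "open e2" unfolding e2_def using vor_open by blast
  have d: "voronoi G p0 \<inter> e2 \<inter> S = {}"
  proof (rule ccontr)
    assume "voronoi G p0 \<inter> e2 \<inter> S \<noteq> {}"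
    then obtain w p where "w \<in> voronoi G p0" "p \<in> orbit G y" "p \<noteq> p0" "w \<in> voronoi G p"
      unfolding e2_def by blast
    moreover have "p \<in> orbit G p0" using p \<open>p \<in> orbit G y\<close> orbit_eq by metis
    ultimately show False using vor_disj by blast
  qed
  have c: "S \<subseteq> voronoi G p0 \<union> e2" using S(2) unfolding e2_def by blast
  have "voronoi G p0 \<inter> S = {} \<or> e2 \<inter> S = {}" using connectedD[OF S(1) o1 o2 d c] .
  moreover have "a \<in> voronoi G p0 \<inter> S" using ab by blast
  moreover have "b \<in> e2 \<inter> S" using ab p ne unfolding e2_def by blast
  ultimately show False by blast
qed

lemma U_card1:
  assumes U: "U" and x: "x \<in> principal G" and y: "y \<in> principal G"
  shows "card (Sset G x y) = 1"
proof -
  have sub: "voronoi G x \<subseteq> (\<Union>p\<in>orbit G y. voronoi G p)"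
    using vor_principal[OF x] U y unfolding U_def Qcell_def by blast
  obtain q0 where q0: "q0 \<in> orbit G y" "x \<in> voronoi G q0" using sub vor_self by blast
  have "Sset G x y = {q0}"
  proof
    show "{q0} \<subseteq> Sset G x y" using q0 vor_self[of x] by (auto simp: Sset_def)
    show "Sset G x y \<subseteq> {q0}"
    proof
      fix q assume q: "q \<in> Sset G x y"
      then obtain w where w: "w \<in> voronoi G q" "w \<in> voronoi G x" "q \<in> orbit G y" by (auto simp: Sset_def)
      have "q0 = q" using conn_vor[OF convex_connected[OF vor_convex] sub q0(1) w(3) vor_self q0(2) w(2) w(1)] .
      then show "q \<in> {q0}" by simp
    qed
  qed
  then show ?thesis by simp
qed

definition CS where "CS = {card (Sset G x y) | x y. x \<in> principal G \<and> y \<in> principal G}"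

lemma card_Sset_le: "card (Sset G x y) \<le> card G"
proof -
  have "Sset G x y \<subseteq> orbit G y" by (auto simp: Sset_def)
  then have "card (Sset G x y) \<le> card (orbit G y)" using orbit_fin card_mono by blast
  also have "\<dots> \<le> card G" unfolding orbit_def by (rule card_image_le[OF fin])
  finally show ?thesis .
qed

lemma CS_fin: "finite CS"
proof -
  have "CS \<subseteq> {..card G}" unfolding CS_def using card_Sset_le by auto
  then show ?thesis using finite_subset by blast
qed

lemma CS_ne: "CS \<noteq> {}" unfolding CS_def using principal_exists by blast

lemma chi_CS: "chi G = Max CS" unfolding chi_def CS_def ..

lemma U_chi: assumes "U" shows "chi G = 1"
proof -
  have "CS \<subseteq> {1}" using U_card1[OF assms] unfolding CS_def by auto
  then have "CS = {1}" using CS_ne by blast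
  then show ?thesis using chi_CS by simp
qed

lemma max_in_Sset:
  assumes z: "z \<in> principal G" and q: "q \<in> orbit G x" and qmax: "\<forall>p\<in>orbit G x. p \<bullet> z \<le> q \<bullet> z"
  shows "q \<in> Sset G z x"
proof -
  define c where "c p = (z - p) \<bullet> q" for p
  have pos: "\<forall>p\<in>orbit G z - {z}. 0 < ((z - p) \<bullet> z) / (\<bar>c p\<bar> + 1)"
  proof
    fix p assume p: "p \<in> orbit G z - {z}"
    have "p \<bullet> z < z \<bullet> z" using strict_cs p orbit_norm by blast
    then show "0 < ((z - p) \<bullet> z) / (\<bar>c p\<bar> + 1)" by (simp add: inner_diff_left)
  qed
  obtain e where e: "e > 0" "\<forall>p\<in>orbit G z - {z}. e < ((z - p) \<bullet> z) / (\<bar>c p\<bar> + 1)"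
    using pos_small[OF _ pos, of 1] orbit_fin by auto
  have "z + e *\<^sub>R q \<in> voronoi G z" unfolding vor_iff
  proof (intro ballI impI)
    fix p assume p: "p \<in> orbit G z" "p \<noteq> z"
    then have h1: "e * (\<bar>c p\<bar> + 1) < (z - p) \<bullet> z"
      using e(2) by (simp add: pos_less_divide_eq add_pos_nonneg)
    have h2: "- (e * \<bar>c p\<bar>) \<le> e * c p" using e(1)
      by (metis abs_ge_minus_self abs_minus_cancel abs_mult abs_of_pos minus_le_iff mult_le_cancel_left_pos)
    have h3: "e * \<bar>c p\<bar> + e < z \<bullet> z - p \<bullet> z" using h1 by (simp add: distrib_left inner_diff_left)
    have "0 < z \<bullet> z - p \<bullet> z + e * c p" using h2 h3 e(1) by linarith
    then show "p \<bullet> (z + e *\<^sub>R q) < z \<bullet> (z + e *\<^sub>R q)"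
      by (simp add: c_def inner_diff_left inner_add_right algebra_simps)
  qed
  moreover have "z + e *\<^sub>R q \<in> voronoi G q" unfolding vor_iff
  proof (intro ballI impI)
    fix p assume p: "p \<in> orbit G q" "p \<noteq> q"
    have "p \<in> orbit G x" using p q orbit_eq by metis
    then have "p \<bullet> z \<le> q \<bullet> z" using qmax by blast
    moreover have "p \<bullet> q < q \<bullet> q" using strict_cs p orbit_norm by metis
    ultimately show "p \<bullet> (z + e *\<^sub>R q) < q \<bullet> (z + e *\<^sub>R q)"
      using e(1) by (simp add: inner_add_right add_le_less_mono)
  qed
  ultimately show ?thesis using q by (auto simp: Sset_def)
qed

lemma max_pt:
  "\<exists>q\<in>orbit G x. \<forall>p\<in>orbit G x. p \<bullet> z \<le> q \<bullet> z"
  using max_exists[OF orbit_fin orbit_ne] .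

lemma not_Qcell_two_max:
  assumes "z \<notin> Qcell G x"
  obtains q1 q2 where "q1 \<in> orbit G x" "q2 \<in> orbit G x" "q1 \<noteq> q2"
    "\<forall>p\<in>orbit G x. p \<bullet> z \<le> q1 \<bullet> z" "q2 \<bullet> z = q1 \<bullet> z"
proof -
  obtain q1 where q1: "q1 \<in> orbit G x" "\<forall>p\<in>orbit G x. p \<bullet> z \<le> q1 \<bullet> z" using max_pt by blast
  have "z \<notin> voronoi G q1" using assms q1(1) by (auto simp: Qcell_def)
  then obtain q2 where q2: "q2 \<in> orbit G q1" "q2 \<noteq> q1" "\<not> q2 \<bullet> z < q1 \<bullet> z" by (auto simp: vor_iff)
  have q2x: "q2 \<in> orbit G x" using q2(1) q1(1) orbit_eq by metis
  then have "q2 \<bullet> z = q1 \<bullet> z" using q2(3) q1(2) by force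
  then show ?thesis using that q1 q2x q2(2) by metis
qed

lemma chi_U: assumes "chi G = 1" shows "U"
  unfolding U_def
proof (intro ballI subsetI)
  fix x z assume x: "x \<in> principal G" and z: "z \<in> principal G"
  show "z \<in> Qcell G x"
  proof (rule ccontr)
    assume "z \<notin> Qcell G x"
    then obtain q1 q2 where q: "q1 \<in> orbit G x" "q2 \<in> orbit G x" "q1 \<noteq> q2"
      "\<forall>p\<in>orbit G x. p \<bullet> z \<le> q1 \<bullet> z" "q2 \<bullet> z = q1 \<bullet> z" by (rule not_Qcell_two_max)
    have "q1 \<in> Sset G z x" using max_in_Sset[OF z q(1) q(4)] .
    moreover have "q2 \<in> Sset G z x" using max_in_Sset[OF z q(2)] q(4,5) by simp
    moreover have "finite (Sset G z x)"
      using orbit_fin[of x] by (rule finite_subset[rotated]) (auto simp: Sset_def)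
    ultimately have "card {q1, q2} \<le> card (Sset G z x)"
      by (intro card_mono) auto
    then have "2 \<le> card (Sset G z x)" using q(3) by simp
    moreover have "card (Sset G z x) \<le> chi G"
      unfolding chi_CS using CS_fin x z by (intro Max_ge) (auto simp: CS_def)
    ultimately show False using assms by simp
  qed
qed

end

context fgrp begin
subsection \<open>Geodesics along segments\<close>

lemma mg_intro:
  assumes "0 \<le> L" "\<forall>t\<in>{0..L}. \<gamma> t \<in> quot_space G" "\<forall>t. t \<notin> {0..L} \<longrightarrow> \<gamma> t = {}"
    "\<forall>s\<in>{0..L}. \<forall>t\<in>{0..L}. qdist (\<gamma> s) (\<gamma> t) = \<bar>s - t\<bar>" "\<gamma> 0 = A" "\<gamma> L = B"
  shows "(L, \<gamma>) \<in> min_geodesics G A B"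
  using assms by (simp add: min_geodesics_def)

lemma mg_dest:
  assumes "(L, \<gamma>) \<in> min_geodesics G A B"
  shows "0 \<le> L" "\<forall>t\<in>{0..L}. \<gamma> t \<in> quot_space G" "\<forall>t. t \<notin> {0..L} \<longrightarrow> \<gamma> t = {}"
    "\<forall>s\<in>{0..L}. \<forall>t\<in>{0..L}. qdist (\<gamma> s) (\<gamma> t) = \<bar>s - t\<bar>" "\<gamma> 0 = A" "\<gamma> L = B"
  using assms by (simp_all add: min_geodesics_def)

lemma seg_geodesic:
  assumes q: "q \<in> orbit G y" and L: "L = norm (z - q)" and qd: "qdist (orbit G z) (orbit G y) = L"
  shows "(L, \<lambda>t. if t \<in> {0..L} then orbit G (z + (t / L) *\<^sub>R (q - z)) else {}) \<in> min_geodesics G (orbit G z) (orbit G y)"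
proof -
  define a where "a t = z + (t / L) *\<^sub>R (q - z)" for t
  have oq: "orbit G q = orbit G y" using q orbit_eq by blast
  have Lnn: "0 \<le> L" using L by simp
  have dist_a: "norm (a s - a t) = \<bar>s - t\<bar>" if "s \<in> {0..L}" "t \<in> {0..L}" for s t
  proof (cases "L = 0")
    case True then show ?thesis using that by simp
  next
    case False
    have "a s - a t = ((s - t) / L) *\<^sub>R (q - z)" by (simp add: a_def algebra_simps diff_divide_distrib)
    then have "norm (a s - a t) = \<bar>s - t\<bar> / L * L" using False L Lnn by (simp add: norm_minus_commute)
    then show ?thesis using False by simp
  qed
  have a0: "a 0 = z" by (simp add: a_def)
  have aL: "orbit G (a L) = orbit G y"
  proof (cases "L = 0")
    case True then have "z = q" using L by simp
    then show ?thesis using oq True by (simp add: a_def)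
  next
    case False then show ?thesis using oq by (simp add: a_def)
  qed
  have key: "qdist (orbit G (a s)) (orbit G (a t)) = t - s" if st: "s \<in> {0..L}" "t \<in> {0..L}" "s \<le> t" for s t
  proof -
    have le: "qdist (orbit G (a s)) (orbit G (a t)) \<le> t - s"
      using qdist_le[OF orbit_self orbit_self, of "a s" "a t"] dist_a[OF st(1,2)] st(3) by simp
    have "qdist (orbit G z) (orbit G (a s)) \<le> s"
      using qdist_le[OF orbit_self orbit_self, of z "a s"] dist_a[of 0 s] st a0 by (simp add: norm_minus_commute)
    moreover have "qdist (orbit G (a t)) (orbit G y) \<le> L - t"
      using qdist_le[OF orbit_self orbit_self, of "a t" "a L"] dist_a[of t L] st aL by simp
    moreover have "L \<le> qdist (orbit G z) (orbit G (a s)) + qdist (orbit G (a s)) (orbit G (a t)) + qdist (orbit G (a t)) (orbit G y)"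
      using qd qdist_tri[where a=z and b="a s" and c=y] qdist_tri[where a="a s" and b="a t" and c=y] by linarith
    ultimately show ?thesis using le by linarith
  qed
  define \<gamma> where "\<gamma> = (\<lambda>t. if t \<in> {0..L} then orbit G (z + (t / L) *\<^sub>R (q - z)) else {})"
  have g_a: "\<gamma> t = orbit G (a t)" if "t \<in> {0..L}" for t using that by (simp add: \<gamma>_def a_def)
  have "(L, \<gamma>) \<in> min_geodesics G (orbit G z) (orbit G y)"
  proof (rule mg_intro)
    show "0 \<le> L" by (rule Lnn)
    show "\<forall>t\<in>{0..L}. \<gamma> t \<in> quot_space G" by (simp add: g_a quot_space_def)
    show "\<forall>t. t \<notin> {0..L} \<longrightarrow> \<gamma> t = {}" by (simp add: \<gamma>_def)
    show "\<forall>s\<in>{0..L}. \<forall>t\<in>{0..L}. qdist (\<gamma> s) (\<gamma> t) = \<bar>s - t\<bar>"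
    proof (intro ballI)
      fix s t assume st: "s \<in> {0..L}" "t \<in> {0..L}"
      show "qdist (\<gamma> s) (\<gamma> t) = \<bar>s - t\<bar>"
      proof (cases "s \<le> t")
        case True then show ?thesis using key[OF st True] st by (simp add: g_a)
      next
        case False then show ?thesis using key[OF st(2,1)] st qdist_sym by (simp add: g_a)
      qed
    qed
    show "\<gamma> 0 = orbit G z" using g_a[of 0] Lnn a0 by simp
    show "\<gamma> L = orbit G y" using g_a[of L] Lnn aL by simp
  qed
  then show ?thesis by (simp add: \<gamma>_def)
qed

lemma A_U:
  assumes A: "\<forall>x y. card (min_geodesics G (orbit G x) (orbit G y)) = 1"
  shows "U"
  unfolding U_def
proof (intro ballI subsetI)
  fix x z assume x: "x \<in> principal G" and z: "z \<in> principal G"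
  show "z \<in> Qcell G x"
  proof (rule ccontr)
    assume "z \<notin> Qcell G x"
    then obtain q1 q2 where q: "q1 \<in> orbit G x" "q2 \<in> orbit G x" "q1 \<noteq> q2"
      "\<forall>p\<in>orbit G x. p \<bullet> z \<le> q1 \<bullet> z" "q2 \<bullet> z = q1 \<bullet> z" by (rule not_Qcell_two_max)
    define L where "L = norm (z - q1)"
    have L2: "norm (z - q2) = L" unfolding L_def
      using norm_diff_eq_from_inner[of q2 q1 z] q orbit_norm by metis
    have Lpos: "L > 0"
    proof (rule ccontr)
      assume "\<not> L > 0" then have "L = 0" unfolding L_def by simp
      then have "z = q1" "z = q2" using L2 unfolding L_def by auto
      then show False using q(3) by simp
    qed
    have qd: "qdist (orbit G z) (orbit G x) = L"
    proof -
      obtain g where g: "g \<in> G" "qdist (orbit G z) (orbit G x) = norm (z - g x)" using qdist_attain2 by blast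
      have "norm (z - q1) \<le> norm (z - g x)"
        using norm_diff_le_from_inner[of "g x" q1 z] q(1,4) orbit_act[OF g(1)] orbit_norm by metis
      moreover have "qdist (orbit G z) (orbit G x) \<le> L"
        unfolding L_def using qdist_le[OF orbit_self] q(1) orbit_eq by metis
      ultimately show ?thesis using g L_def by simp
    qed
    define \<gamma> where "\<gamma> q = (\<lambda>t. if t \<in> {0..L} then orbit G (z + (t / L) *\<^sub>R (q - z)) else {})" for q
    have m1: "(L, \<gamma> q1) \<in> min_geodesics G (orbit G z) (orbit G x)"
      unfolding \<gamma>_def by (rule seg_geodesic[OF q(1) L_def qd])
    have m2: "(L, \<gamma> q2) \<in> min_geodesics G (orbit G z) (orbit G x)"
      unfolding \<gamma>_def by (rule seg_geodesic[OF q(2) L2[symmetric] qd])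
    have pos: "\<forall>g\<in>G - {id}. 0 < norm (g z - z) / 3"
      using z principal_iff by auto
    obtain t where t: "t > 0" "t \<le> L" "\<forall>g\<in>G - {id}. t < norm (g z - z) / 3"
      using pos_small[OF _ pos Lpos] fin by auto
    have "\<gamma> q1 t \<noteq> \<gamma> q2 t"
    proof
      assume eq: "\<gamma> q1 t = \<gamma> q2 t"
      define a1 where "a1 = z + (t / L) *\<^sub>R (q1 - z)"
      define a2 where "a2 = z + (t / L) *\<^sub>R (q2 - z)"
      have "orbit G a1 = orbit G a2" using eq t unfolding \<gamma>_def a1_def a2_def by simp
      then have "a2 \<in> orbit G a1" using orbit_self by metis
      then obtain g where g: "g \<in> G" "a2 = g a1" by (rule orbit_memE)
      have ga1: "g a1 = g z + (t / L) *\<^sub>R g (q1 - z)" unfolding a1_def using g(1) by (simp only: G_add G_scale)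
      have "z + (t / L) *\<^sub>R (q2 - z) = g z + (t / L) *\<^sub>R g (q1 - z)" using g(2) ga1 a2_def by simp
      then have "g z - z = (t / L) *\<^sub>R (q2 - z) - (t / L) *\<^sub>R g (q1 - z)" by (simp add: algebra_simps)
      then have "norm (g z - z) \<le> norm ((t / L) *\<^sub>R (q2 - z)) + norm ((t / L) *\<^sub>R g (q1 - z))"
        by (simp only: norm_triangle_ineq4)
      also have "\<dots> = (t / L) * norm (q2 - z) + (t / L) * norm (g (q1 - z))"
        using t Lpos by simp
      also have "\<dots> = 2 * t"
        using L2 G_norm[OF g(1)] Lpos unfolding L_def by (simp add: norm_minus_commute)
      finally have n: "norm (g z - z) \<le> 2 * t" .
      show False
      proof (cases "g = id")
        case True
        then show False using g q(3) t Lpos by (auto simp: a1_def a2_def)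
      next
        case False
        then have "t < norm (g z - z) / 3" using t(3) g(1) by blast
        then show False using n t(1) by linarith
      qed
    qed
    then have ne: "(L, \<gamma> q1) \<noteq> (L, \<gamma> q2)" by auto
    have "card (min_geodesics G (orbit G z) (orbit G x)) = 1" using A by blast
    then obtain e where "min_geodesics G (orbit G z) (orbit G x) = {e}" by (rule card_1_singletonE)
    then show False using m1 m2 ne by (metis singletonD)
  qed
qed

end


lemma gen_comp: "f \<in> generated R \<Longrightarrow> g \<in> generated R \<Longrightarrow> f \<circ> g \<in> generated R"
  by (induction f rule: generated.induct) (auto simp: comp_assoc intro: generated.intros)

lemma gen_base: "r \<in> R \<Longrightarrow> r \<in> generated R"
  using generated.gen_step[OF _ generated.gen_id] by (metis comp_id)

lemma gen_mono: assumes "R \<subseteq> R'" shows "generated R \<subseteq> generated R'"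
proof
  fix f assume "f \<in> generated R"
  then show "f \<in> generated R'" using assms by (induction f rule: generated.induct) (auto intro: generated.intros)
qed

lemma subspace_fix:
  fixes h :: "'a::euclidean_space \<Rightarrow> 'a"
  assumes "linear h" shows "subspace {x. h x = x}"
  using assms unfolding subspace_def by (simp add: linear_0 linear_add linear_scale)

lemma seg_negl:
  fixes c :: "'a::euclidean_space"
  assumes F: "subspace F" and c: "c \<notin> F" and d: "dim F + 1 < DIM('a)"
  shows "negligible {r. \<exists>s\<in>{0..1}. (1 - s) *\<^sub>R c + s *\<^sub>R r \<in> F}"
proof -
  have sub: "{r. \<exists>s\<in>{0..1}. (1 - s) *\<^sub>R c + s *\<^sub>R r \<in> F} \<subseteq> span (insert c F)"
  proof
    fix r assume "r \<in> {r. \<exists>s\<in>{0..1}. (1 - s) *\<^sub>R c + s *\<^sub>R r \<in> F}"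
    then obtain s where s: "s \<in> {0..1}" "(1 - s) *\<^sub>R c + s *\<^sub>R r \<in> F" by blast
    have "s \<noteq> 0" using s c by auto
    have "(1 / s) *\<^sub>R ((1 - s) *\<^sub>R c + s *\<^sub>R r) = ((1 - s) / s) *\<^sub>R c + r"
      using \<open>s \<noteq> 0\<close> by (simp add: scaleR_add_right)
    then have "r = (1 / s) *\<^sub>R ((1 - s) *\<^sub>R c + s *\<^sub>R r) - ((1 - s) / s) *\<^sub>R c" by simp
    moreover have "(1 - s) *\<^sub>R c + s *\<^sub>R r \<in> span (insert c F)"
      using s(2) by (meson span_base span_mono subset_insertI subsetD)
    moreover have "c \<in> span (insert c F)" by (simp add: span_base)
    ultimately show "r \<in> span (insert c F)" by (metis span_diff span_scale)
  qed
  have "dim (span (insert c F)) \<le> dim F + 1" by (simp add: dim_span dim_insert)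
  then have "negligible (span (insert c F))" using d by (intro negligible_lowdim) simp
  then show ?thesis using sub negligible_subset by blast
qed

context fgrp begin

definition T where "T = {g\<in>G. \<exists>v. v \<noteq> 0 \<and> g = reflection v}"

lemma T_sub: "T \<subseteq> G" by (auto simp: T_def)
lemma T_fin: "finite T" using fin T_sub finite_subset by blast
lemma TE: assumes "t \<in> T" obtains v where "v \<noteq> 0" "t = reflection v" "t \<in> G"
  using assms by (auto simp: T_def)

lemma gen_sub: assumes "R \<subseteq> G" shows "generated R \<subseteq> G"
proof
  fix f assume "f \<in> generated R"
  then show "f \<in> G" using assms by (induction f rule: generated.induct) (auto simp: idG G_comp)
qed

lemma gen_inv: assumes "R \<subseteq> T" "f \<in> generated R" shows "inv f \<in> generated R"
  using assms(2)
proof (induction f rule: generated.induct)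
  case gen_id then show ?case by (subst inv_id) (rule generated.gen_id)
next
  case (gen_step r f)
  obtain v where v: "v \<noteq> 0" "r = reflection v" "r \<in> G" using gen_step.hyps(1) assms(1) by (blast elim: TE)
  have fG: "f \<in> G" using gen_step.hyps(2) gen_sub assms(1) T_sub by blast
  have "inv (r \<circ> f) = inv f \<circ> inv r"
    using o_inv_distrib orthogonal_transformation_bij G_orth v(3) fG by blast
  also have "inv r = r" using v refl_inv by simp
  finally show ?case using gen_step gen_comp gen_base by metis
qed

lemma nonrefl_dim:
  assumes h: "h \<in> G" "h \<noteq> id" "h \<notin> T"
  shows "dim {x. h x = x} + 1 < DIM('a)"
proof (rule ccontr)
  define F where "F = {x. h x = x}"
  assume "\<not> dim {x. h x = x} + 1 < DIM('a)"
  then have dF: "DIM('a) \<le> dim F + 1" unfolding F_def by simp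
  have sF: "subspace F" unfolding F_def by (rule subspace_fix[OF G_lin[OF h(1)]])
  have "dim F < DIM('a)"
  proof (rule ccontr)
    assume "\<not> dim F < DIM('a)"
    then have "dim F = DIM('a)" using dim_subset_UNIV[of F] by simp
    then have "span F = UNIV" using dim_eq_full by blast
    then have "F = UNIV" using sF span_eq_iff by metis
    then have "h = id" unfolding F_def by (auto simp: fun_eq_iff)
    then show False using h by simp
  qed
  then obtain v where v: "v \<noteq> 0" "\<And>y. y \<in> span F \<Longrightarrow> orthogonal v y"
    using orthogonal_to_subspace_exists by blast
  define H where "H = {x. v \<bullet> x = 0}"
  have FH: "F \<subseteq> H" using v(2) span_base unfolding H_def orthogonal_def by blast
  have sH: "subspace H" unfolding H_def by (rule subspace_hyperplane)
  have dH: "dim H = DIM('a) - 1" unfolding H_def using dim_hyperplane[OF v(1)] .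
  have "F = H" using subspace_dim_equal[OF sF sH FH] dH dF by simp
  have hH: "h x = x" if "v \<bullet> x = 0" for x using that \<open>F = H\<close> unfolding F_def H_def by blast
  define l where "l = (h v \<bullet> v) / (v \<bullet> v)"
  define w where "w = h v - l *\<^sub>R v"
  have vv: "v \<bullet> v \<noteq> 0" using v(1) by simp
  have wv: "v \<bullet> w = 0" unfolding w_def l_def using vv by (simp add: inner_diff_right inner_commute)
  have "h v \<bullet> w = 0"
  proof -
    have "h v \<bullet> h w = v \<bullet> w" using G_inner[OF h(1)] .
    then show ?thesis using hH[OF wv] wv by simp
  qed
  then have "w \<bullet> w = 0" using wv unfolding w_def by (simp add: inner_diff_left inner_commute)
  then have hv: "h v = l *\<^sub>R v" unfolding w_def by simp
  have "norm (h v) = norm v" using G_norm[OF h(1)] .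
  then have "\<bar>l\<bar> = 1" using hv v(1) by simp
  then have l: "l = 1 \<or> l = -1" by linarith
  have dec: "h x = (x - ((x \<bullet> v) / (v \<bullet> v)) *\<^sub>R v) + ((x \<bullet> v) / (v \<bullet> v) * l) *\<^sub>R v" for x
  proof -
    let ?m = "(x \<bullet> v) / (v \<bullet> v)"
    have "v \<bullet> (x - ?m *\<^sub>R v) = 0" using vv by (simp add: inner_diff_right inner_commute)
    then have "h (x - ?m *\<^sub>R v) = x - ?m *\<^sub>R v" by (rule hH)
    moreover have "x = (x - ?m *\<^sub>R v) + ?m *\<^sub>R v" by simp
    ultimately have "h x = (x - ?m *\<^sub>R v) + ?m *\<^sub>R h v" by (metis G_add G_scale h(1))
    then show ?thesis using hv by simp
  qed
  show False using l
  proof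
    assume "l = 1"
    then have "h = id" using dec by (auto simp: fun_eq_iff)
    then show False using h by simp
  next
    assume "l = -1"
    have "h x = reflection v x" for x
    proof -
      define m where "m = (x \<bullet> v) / (v \<bullet> v)"
      have e1: "2 * (x \<bullet> v) / (v \<bullet> v) = m + m" unfolding m_def by (rule sym, rule add_divide_distrib[symmetric, THEN trans]) simp
      have "h x = (x - m *\<^sub>R v) + (m * l) *\<^sub>R v" using dec[of x] unfolding m_def .
      also have "(m * l) *\<^sub>R v = - (m *\<^sub>R v)" using \<open>l = -1\<close> by simp
      also have "(x - m *\<^sub>R v) + - (m *\<^sub>R v) = x - (m + m) *\<^sub>R v" by (simp only: scaleR_add_left diff_conv_add_uminus minus_add add.assoc)
      also have "\<dots> = reflection v x" unfolding refl_apply e1 ..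
      finally show ?thesis .
    qed
    then have "h = reflection v" by (simp add: fun_eq_iff)
    then show False using h v(1) by (auto simp: T_def)
  qed
qed

lemma U_C: assumes U: "U" shows "reflection_group G"
proof -
  define W where "W = generated T"
  have WG: "W \<subseteq> G" unfolding W_def using gen_sub T_sub by blast
  have "G \<subseteq> W"
  proof
    fix g assume g: "g \<in> G"
    obtain c where c: "c \<in> principal G" using principal_exists by blast
    have Wfin: "finite W" using WG fin finite_subset by blast
    have Wne: "W \<noteq> {}" unfolding W_def using generated.gen_id by blast
    obtain w where w: "w \<in> W" "\<forall>w'\<in>W. w' (g c) \<bullet> c \<le> w (g c) \<bullet> c"
      using max_exists[OF Wfin Wne, of "\<lambda>w. w (g c) \<bullet> c"] by blast
    have c': "\<forall>g\<in>G. g c = c \<longrightarrow> g = id" using c by (simp add: principal_iff)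
    define q where "q = w (g c)"
    have wG: "w \<in> G" using w WG by blast
    have qo: "q \<in> orbit G c" unfolding q_def using orbit_act[OF G_comp[OF wG g]] by simp
    have qP: "q \<in> principal G" using principal_orbit[OF c qo] .
    define nn where "nn t = c - t c" for t :: "'a \<Rightarrow> 'a"
    define Ch where "Ch = {u. \<forall>t\<in>T. 0 < u \<bullet> nn t}"
    have nnv: "nn t = (2 * (c \<bullet> v) / (v \<bullet> v)) *\<^sub>R v" if "t = reflection v" for t v
      unfolding nn_def that by (rule refl_diff)
    have cv: "c \<bullet> v \<noteq> 0" if "t \<in> T" "t = reflection v" "v \<noteq> 0" for t v
    proof
      assume "c \<bullet> v = 0"
      then have "t c = c" using refl_fix[OF that(3)] that(2) by (simp add: inner_commute)
      moreover have "t \<in> G" using that(1) T_sub by blast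
      ultimately have "t = id" using c' by blast
      then show False using refl_ne_id[OF that(3)] that(2) by simp
    qed
    have Ch_fix: "t u \<noteq> u" if u_in: "u \<in> Ch" and t_in: "t \<in> T" for u t
    proof -
      obtain v where v: "v \<noteq> 0" "t = reflection v" using t_in by (blast elim: TE)
      have "0 < u \<bullet> nn t" using u_in t_in unfolding Ch_def by blast
      then have "u \<bullet> v \<noteq> 0" using nnv[OF v(2)] by auto
      then show ?thesis using refl_fix[OF v(1), of u] v(2) by simp
    qed
    have cCh: "c \<in> Ch" unfolding Ch_def
    proof (intro CollectI ballI)
      fix t assume t: "t \<in> T"
      obtain v where v: "v \<noteq> 0" "t = reflection v" using t by (blast elim: TE)
      have "c \<bullet> v \<noteq> 0" using cv t v by blast
      then have sq: "0 < (c \<bullet> v) * (c \<bullet> v)" by (metis not_real_square_gt_zero)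
      have vv: "0 < v \<bullet> v" using v(1) by simp
      have "0 < 2 * (c \<bullet> v) * (c \<bullet> v) / (v \<bullet> v)"
        using sq vv by (intro divide_pos_pos) (simp_all add: mult.assoc)
      then show "0 < c \<bullet> nn t" using v nnv[OF v(2)] by (simp add: inner_commute)
    qed
    have qCh: "q \<in> Ch" unfolding Ch_def
    proof (intro CollectI ballI)
      fix t assume t: "t \<in> T"
      obtain v where v: "v \<noteq> 0" "t = reflection v" using t by (blast elim: TE)
      have "t \<circ> w \<in> W" unfolding W_def using t w(1) W_def generated.gen_step by blast
      then have "t q \<bullet> c \<le> q \<bullet> c" using w(2) unfolding q_def by fastforce
      moreover have "t q \<bullet> c = q \<bullet> c - (2 * (q \<bullet> v) / (v \<bullet> v)) * (c \<bullet> v)"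
        using v by (simp add: refl_apply inner_diff_left inner_diff_right inner_commute)
      ultimately have k: "0 \<le> (2 * (q \<bullet> v) / (v \<bullet> v)) * (c \<bullet> v)" by simp
      have vv: "0 < v \<bullet> v" using v(1) by simp
      have "0 \<le> ((v \<bullet> v) / 2) * ((2 * (q \<bullet> v) / (v \<bullet> v)) * (c \<bullet> v))"
        by (rule mult_nonneg_nonneg) (use vv k in auto)
      moreover have "((v \<bullet> v) / 2) * ((2 * (q \<bullet> v) / (v \<bullet> v)) * (c \<bullet> v)) = (q \<bullet> v) * (c \<bullet> v)"
        using vv by (simp add: field_simps)
      ultimately have ge: "0 \<le> (q \<bullet> v) * (c \<bullet> v)" by simp
      have "q \<bullet> v \<noteq> 0"
      proof
        assume "q \<bullet> v = 0"
        then have "t q = q" using refl_fix[OF v(1)] v(2) by (simp add: inner_commute)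
        moreover have "t \<in> G" using t T_sub by blast
        moreover have "\<forall>g\<in>G. g q = q \<longrightarrow> g = id" using qP by (simp add: principal_iff)
        ultimately have "t = id" by blast
        then show False using refl_ne_id[OF v(1)] v(2) by simp
      qed
      then have "0 < (q \<bullet> v) * (c \<bullet> v)" using ge cv[OF t v(2) v(1)]
        by (simp add: less_le mult_eq_0_iff)
      then show "0 < q \<bullet> nn t" using v nnv[OF v(2)] by (simp add: inner_commute mult.commute)
    qed
    have Ch_open: "open Ch"
    proof -
      have "Ch = (\<Inter>t\<in>T. {u. 0 < u \<bullet> nn t})" unfolding Ch_def by blast
      moreover have "open {u. 0 < u \<bullet> nn t}" for t
        by (intro open_Collect_less continuous_intros)
      ultimately show ?thesis using T_fin by (auto intro!: open_INT)
    qed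
    have Ch_conv: "convex Ch"
    proof -
      have "Ch = (\<Inter>t\<in>T. {u. 0 < u \<bullet> nn t})" unfolding Ch_def by blast
      moreover have "convex {u. 0 < u \<bullet> nn t}" for t
        using convex_halfspace_gt[of 0 "nn t"] by (simp add: inner_commute)
      ultimately show ?thesis by (auto intro!: convex_INT)
    qed
    define X where "X = G - {id} - T"
    define B where "B p h = {r. \<exists>s\<in>{0..1}. (1 - s) *\<^sub>R p + s *\<^sub>R r \<in> {x. h x = x}}" for p :: 'a and h :: "'a \<Rightarrow> 'a"
    have Bneg: "negligible (B p h)" if "h \<in> X" "p \<in> principal G" for p h
      unfolding B_def
    proof (rule seg_negl)
      show "subspace {x. h x = x}" using subspace_fix G_lin that X_def by blast
      have "\<forall>g\<in>G. g p = p \<longrightarrow> g = id" using that(2) by (simp add: principal_iff)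
      then show "p \<notin> {x. h x = x}" using that(1) X_def by blast
      show "dim {x. h x = x} + 1 < DIM('a)" using nonrefl_dim that X_def by blast
    qed
    define NN where "NN = B c ` X \<union> B q ` X"
    have "finite NN" unfolding NN_def X_def using fin by simp
    moreover have "\<forall>N\<in>NN. negligible N" unfolding NN_def using Bneg c qP by blast
    ultimately obtain r where r: "r \<in> Ch" "\<forall>N\<in>NN. r \<notin> N"
      using exists_avoid[OF Ch_open] cCh by blast
    define S where "S = closed_segment c r \<union> closed_segment q r"
    have Sconn: "connected S" unfolding S_def
      by (rule connected_Un) (auto intro: connected_segment)
    have SCh: "S \<subseteq> Ch" unfolding S_def
      using closed_segment_subset[OF cCh r(1) Ch_conv] closed_segment_subset[OF qCh r(1) Ch_conv] by blast
    have SP: "S \<subseteq> principal G"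
    proof
      fix u assume u: "u \<in> S"
      show "u \<in> principal G" unfolding principal_iff
      proof (intro ballI impI)
        fix h assume h: "h \<in> G" "h u = u"
        show "h = id"
        proof (rule ccontr)
          assume hid: "h \<noteq> id"
          show False
          proof (cases "h \<in> T")
            case True then show False using Ch_fix SCh u h by blast
          next
            case False
            then have hX: "h \<in> X" using h hid X_def by blast
            from u show False unfolding S_def
            proof
              assume "u \<in> closed_segment c r"
              then obtain s where "s \<in> {0..1}" "u = (1 - s) *\<^sub>R c + s *\<^sub>R r"
                unfolding closed_segment_def by auto
              then have "r \<in> B c h" unfolding B_def using h by blast
              then show False using r(2) hX unfolding NN_def by blast
            next
              assume "u \<in> closed_segment q r"
              then obtain s where "s \<in> {0..1}" "u = (1 - s) *\<^sub>R q + s *\<^sub>R r"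
                unfolding closed_segment_def by auto
              then have "r \<in> B q h" unfolding B_def using h by blast
              then show False using r(2) hX unfolding NN_def by blast
            qed
          qed
        qed
      qed
    qed
    have "S \<subseteq> (\<Union>p\<in>orbit G c. voronoi G p)"
      using SP U c unfolding U_def Qcell_def by blast
    moreover have "c \<in> S" "q \<in> S" unfolding S_def by auto
    ultimately have "c = q"
      using conn_vor[OF Sconn _ orbit_self qo _ vor_self _ vor_self] by blast
    then have "(w \<circ> g) c = c" unfolding q_def by simp
    then have wg: "w \<circ> g = id" by (rule c'[rule_format, OF G_comp[OF wG g]])
    have "g = inv w"
    proof
      fix x
      have "w (g x) = x" using wg by (simp add: fun_eq_iff)
      then show "g x = inv w x" using G_invl[OF wG, of "g x"] by simp
    qed
    moreover have "inv w \<in> W" using gen_inv[OF subset_refl, of w] w(1) unfolding W_def by simp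
    ultimately show "g \<in> W" by simp
  qed
  then have "G = generated T" using WG unfolding W_def by (rule equalityI)
  moreover have "\<forall>r\<in>T. \<exists>v. v \<noteq> 0 \<and> r = reflection v" by (auto simp: T_def)
  ultimately show ?thesis unfolding reflection_group_def by blast
qed

end


lemma sign3:
  fixes a b c :: real
  assumes "a \<noteq> 0" "b \<noteq> 0" "c \<noteq> 0"
  shows "a * c < 0 \<longleftrightarrow> \<not> (a * b < 0 \<longleftrightarrow> b * c < 0)"
  using assms by (cases "a > 0"; cases "b > 0"; cases "c > 0") (auto simp: mult_less_0_iff)

lemma refl_max:
  fixes a y n :: "'a::real_inner"
  assumes "n \<noteq> 0" "a \<bullet> reflection n y \<le> a \<bullet> y" "0 < a \<bullet> n"
  shows "0 \<le> y \<bullet> n"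
proof -
  have "a \<bullet> reflection n y = a \<bullet> y - (2 * (y \<bullet> n) / (n \<bullet> n)) * (a \<bullet> n)"
    by (simp add: refl_apply inner_diff_right)
  then have k: "0 \<le> (2 * (y \<bullet> n) / (n \<bullet> n)) * (a \<bullet> n)" using assms(2) by simp
  have nn: "0 < n \<bullet> n" using assms(1) by simp
  show ?thesis
  proof (rule ccontr)
    assume "\<not> 0 \<le> y \<bullet> n"
    then have "2 * (y \<bullet> n) / (n \<bullet> n) < 0" using nn by (simp add: divide_neg_pos)
    then have "(2 * (y \<bullet> n) / (n \<bullet> n)) * (a \<bullet> n) < 0" using assms(3) by (rule mult_neg_pos)
    then show False using k by linarith
  qed
qed

lemma poly_lim:
  fixes D P Q :: real
  assumes "\<forall>e>0. D + e * P + e * e * Q \<le> 0" shows "D \<le> 0"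
proof (rule ccontr)
  assume "\<not> D \<le> 0" then have D: "D > 0" by simp
  define M where "M = \<bar>P\<bar> + \<bar>Q\<bar> + 1"
  have M: "M > 0" unfolding M_def by simp
  define e where "e = min 1 (D / (2 * M))"
  have e0: "0 < e" using D M by (simp add: e_def)
  have e1: "e \<le> 1" by (simp add: e_def)
  have "e \<le> D / (2 * M)" by (simp add: e_def)
  then have "e * (2 * M) \<le> D" using M by (simp add: pos_le_divide_eq)
  then have h3: "e * \<bar>P\<bar> + e * \<bar>Q\<bar> + e \<le> D / 2" unfolding M_def by (simp add: algebra_simps)
  have "e * (- \<bar>P\<bar>) \<le> e * P" using e0 by (intro mult_left_mono) auto
  then have h1: "- (e * \<bar>P\<bar>) \<le> e * P" by simp
  have "(e * e) * (- \<bar>Q\<bar>) \<le> (e * e) * Q" using e0 by (intro mult_left_mono) auto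
  moreover have "e * e * \<bar>Q\<bar> \<le> e * \<bar>Q\<bar>"
  proof -
    have "e * e \<le> e * 1" using e0 e1 by (intro mult_left_mono) auto
    then show ?thesis by (intro mult_right_mono) auto
  qed
  ultimately have h2: "- (e * \<bar>Q\<bar>) \<le> e * e * Q" by simp
  have "D + e * P + e * e * Q \<le> 0" using assms e0 by blast
  then show False using h1 h2 h3 D e0 by linarith
qed

context fgrp begin

lemma T_G: "t \<in> T \<Longrightarrow> t \<in> G" using T_sub by blast

lemma T_invol: "t \<in> T \<Longrightarrow> t (t x) = x"
  by (metis TE refl_invol)

lemma T_comp_self: "t \<in> T \<Longrightarrow> t \<circ> t = id"
  by (simp add: fun_eq_iff T_invol)

lemma T_sa: "t \<in> T \<Longrightarrow> t x \<bullet> y = x \<bullet> t y"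
  by (metis TE refl_selfadj)

lemma T_inv: "t \<in> T \<Longrightarrow> inv t = t"
  by (metis TE refl_inv)

lemma T_conj: assumes "g \<in> G" "t \<in> T" shows "g \<circ> t \<circ> inv g \<in> T"
proof -
  obtain v where v: "v \<noteq> 0" "t = reflection v" "t \<in> G" using assms(2) by (rule TE)
  have e: "g \<circ> t \<circ> inv g = reflection (g v)" using refl_conj[OF G_orth[OF assms(1)]] v(2) by simp
  have "g v \<noteq> 0" using v(1) G_norm[OF assms(1), of v] by auto
  moreover have "g \<circ> t \<circ> inv g \<in> G" using assms v(3) by (simp add: G_comp G_inv)
  ultimately show ?thesis using e unfolding T_def by blast
qed

lemma T_conj_self: "s \<in> T \<Longrightarrow> t \<in> T \<Longrightarrow> s \<circ> t \<circ> s \<in> T"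
  using T_conj[OF T_G] T_inv by metis

definition generic where "generic x \<longleftrightarrow> (\<forall>t\<in>T. t x \<noteq> x)"
definition Sep where "Sep x y = {t\<in>T. (x - t x) \<bullet> (y - t y) < 0}"

lemma sep_val:
  assumes "v \<noteq> 0" "t = reflection v"
  shows "(x - t x) \<bullet> (y - t y) = 4 * ((x \<bullet> v) * (y \<bullet> v)) / (v \<bullet> v)"
proof -
  have "v \<bullet> v \<noteq> 0" using assms by simp
  then show ?thesis using assms(2) by (simp add: refl_diff field_simps)
qed

lemma sep_iff:
  assumes "t \<in> T" "v \<noteq> 0" "t = reflection v"
  shows "t \<in> Sep x y \<longleftrightarrow> (x \<bullet> v) * (y \<bullet> v) < 0"
proof -
  have vv: "0 < v \<bullet> v" using assms by simp
  have "t \<in> Sep x y \<longleftrightarrow> 4 * ((x \<bullet> v) * (y \<bullet> v)) / (v \<bullet> v) < 0"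
    using assms sep_val[OF assms(2,3)] by (simp add: Sep_def)
  also have "\<dots> \<longleftrightarrow> (x \<bullet> v) * (y \<bullet> v) < 0" using vv by (simp add: pos_divide_less_eq)
  finally show ?thesis .
qed

lemma fix_iff: assumes "v \<noteq> 0" "t = reflection v" shows "t x = x \<longleftrightarrow> x \<bullet> v = 0"
  using refl_fix[OF assms(1)] assms(2) by simp

lemma sep_sym: "Sep x y = Sep y x"
  unfolding Sep_def by (simp add: inner_commute)

lemma sep_self: "Sep x x = {}"
  unfolding Sep_def by (simp add: not_less)

lemma sep_T: "Sep x y \<subseteq> T" unfolding Sep_def by blast

lemma sep_trans:
  assumes "generic x" "generic y" "generic z"
  shows "Sep x z = (Sep x y - Sep y z) \<union> (Sep y z - Sep x y)"
proof (rule set_eqI)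
  fix t show "t \<in> Sep x z \<longleftrightarrow> t \<in> (Sep x y - Sep y z) \<union> (Sep y z - Sep x y)"
  proof (cases "t \<in> T")
    case False then show ?thesis using sep_T by blast
  next
    case True
    obtain v where v: "v \<noteq> 0" "t = reflection v" using True by (blast elim: TE)
    have nz: "x \<bullet> v \<noteq> 0" "y \<bullet> v \<noteq> 0" "z \<bullet> v \<noteq> 0"
      using assms True fix_iff[OF v] unfolding generic_def by auto
    show ?thesis
      using sep_iff[OF True v, of x z] sep_iff[OF True v, of x y] sep_iff[OF True v, of y z]
        sign3[OF nz] by auto
  qed
qed

lemma conj_inv_apply:
  assumes "g \<in> G" shows "(inv g \<circ> (g \<circ> t \<circ> inv g) \<circ> g) = t"
  using assms by (simp add: fun_eq_iff G_invl)

lemma conj_inj: assumes "g \<in> G" shows "inj_on (\<lambda>t. g \<circ> t \<circ> inv g) A"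
  by (rule inj_onI) (metis conj_inv_apply[OF assms])

lemma inv_inv_G: "g \<in> G \<Longrightarrow> inv (inv g) = g"
  using G_orth orthogonal_transformation_bij inv_inv_eq by blast

lemma sep_conj:
  assumes g: "g \<in> G" shows "Sep (g x) (g y) = (\<lambda>t. g \<circ> t \<circ> inv g) ` Sep x y"
proof (rule set_eqI)
  fix t'
  show "t' \<in> Sep (g x) (g y) \<longleftrightarrow> t' \<in> (\<lambda>t. g \<circ> t \<circ> inv g) ` Sep x y"
  proof
    assume t': "t' \<in> Sep (g x) (g y)"
    define t where "t = inv g \<circ> t' \<circ> g"
    have tT: "t \<in> T" unfolding t_def using T_conj[OF G_inv[OF g], of t'] t' inv_inv_G[OF g]
      by (simp add: Sep_def)
    have tt: "t' = g \<circ> t \<circ> inv g" unfolding t_def using g by (simp add: fun_eq_iff G_invr)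
    have d: "x - t x = inv g (g x - t' (g x))" for x
      unfolding t_def using g by (simp add: G_diff[OF G_inv[OF g]] G_invl)
    have "(x - t x) \<bullet> (y - t y) = (g x - t' (g x)) \<bullet> (g y - t' (g y))"
      unfolding d using G_inner[OF G_inv[OF g]] by simp
    then have "t \<in> Sep x y" using t' tT by (simp add: Sep_def)
    then show "t' \<in> (\<lambda>t. g \<circ> t \<circ> inv g) ` Sep x y" using tt by blast
  next
    assume "t' \<in> (\<lambda>t. g \<circ> t \<circ> inv g) ` Sep x y"
    then obtain t where t: "t \<in> Sep x y" "t' = g \<circ> t \<circ> inv g" by blast
    have tT: "t \<in> T" using t(1) by (simp add: Sep_def)
    have d: "g x - t' (g x) = g (x - t x)" for x using g t(2) by (simp add: G_diff G_invl)
    have "(g x - t' (g x)) \<bullet> (g y - t' (g y)) = (x - t x) \<bullet> (y - t y)"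
      unfolding d using G_inner[OF g] by simp
    then show "t' \<in> Sep (g x) (g y)" using t T_conj[OF g tT] by (simp add: Sep_def)
  qed
qed

lemma sep_conjT: "s \<in> T \<Longrightarrow> Sep (s x) (s y) = (\<lambda>t. s \<circ> t \<circ> s) ` Sep x y"
  using sep_conj[OF T_G] T_inv by metis

lemma generic_act: assumes g: "g \<in> G" and x: "generic x" shows "generic (g x)"
  unfolding generic_def
proof
  fix t assume t: "t \<in> T"
  show "t (g x) \<noteq> g x"
  proof
    assume e: "t (g x) = g x"
    have "inv g \<circ> t \<circ> inv (inv g) \<in> T" using T_conj[OF G_inv[OF g] t] .
    then have "inv g \<circ> t \<circ> g \<in> T" using inv_inv_G[OF g] by simp
    moreover have "(inv g \<circ> t \<circ> g) x = x" using e g by (simp add: G_invl)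
    ultimately show False using x unfolding generic_def by blast
  qed
qed

lemma principal_generic: assumes "x \<in> principal G" shows "generic x"
  unfolding generic_def
proof
  fix t assume t: "t \<in> T"
  obtain v where v: "v \<noteq> 0" "t = reflection v" "t \<in> G" using t by (rule TE)
  have "t \<noteq> id" using refl_ne_id[OF v(1)] v(2) by simp
  then show "t x \<noteq> x" using assms v(3) unfolding principal_iff by blast
qed

definition nrm where "nrm c t = c - t c"

definition vgen where "vgen c \<longleftrightarrow> generic c \<and>
  (\<forall>t\<in>T. \<forall>t1\<in>T. \<forall>t2\<in>T. t1 \<noteq> t2 \<longrightarrow>
     (\<forall>s. \<not> (t1 (c - s *\<^sub>R nrm c t) = c - s *\<^sub>R nrm c t \<and> t2 (c - s *\<^sub>R nrm c t) = c - s *\<^sub>R nrm c t)))"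

definition vT where "vT t = (SOME v. v \<noteq> 0 \<and> t = reflection v)"

lemma vT: assumes "t \<in> T" shows "vT t \<noteq> 0" "t = reflection (vT t)"
proof -
  have "\<exists>v. v \<noteq> 0 \<and> t = reflection v" using assms by (auto simp: T_def)
  then have "vT t \<noteq> 0 \<and> t = reflection (vT t)" unfolding vT_def by (rule someI_ex)
  then show "vT t \<noteq> 0" "t = reflection (vT t)" by auto
qed

lemma vgen_exists: "\<exists>c. vgen c"
proof -
  define w where "w t t1 t2 = (vT t \<bullet> vT t1) *\<^sub>R vT t2 - (vT t \<bullet> vT t2) *\<^sub>R vT t1" for t t1 t2 :: "'a \<Rightarrow> 'a"
  define Nw where "Nw t t1 t2 = (if w t t1 t2 \<noteq> 0 then w t t1 t2 else vT t1)" for t t1 t2 :: "'a \<Rightarrow> 'a"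
  define NN where "NN = (\<lambda>t. {x. vT t \<bullet> x = 0}) ` T \<union> (\<lambda>(t,t1,t2). {x. Nw t t1 t2 \<bullet> x = 0}) ` (T \<times> T \<times> T)"
  have "finite NN" unfolding NN_def using T_fin by simp
  moreover have "\<forall>N\<in>NN. negligible N"
  proof
    fix N assume "N \<in> NN"
    then consider t where "t \<in> T" "N = {x. vT t \<bullet> x = 0}"
      | t t1 t2 where "t \<in> T" "t1 \<in> T" "t2 \<in> T" "N = {x. Nw t t1 t2 \<bullet> x = 0}"
      unfolding NN_def by blast
    then show "negligible N"
    proof cases
      case 1 then show ?thesis using vT negligible_hyp0 by blast
    next
      case 2
      have "Nw t t1 t2 \<noteq> 0" unfolding Nw_def using vT(1)[OF 2(2)] by auto
      then show ?thesis using 2(4) negligible_hyp0 by blast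
    qed
  qed
  ultimately obtain c where c: "\<forall>N\<in>NN. c \<notin> N" using exists_avoid[of UNIV NN] by auto
  have c1: "c \<bullet> vT t \<noteq> 0" if "t \<in> T" for t
    using c that unfolding NN_def by (auto simp: inner_commute)
  have c2: "c \<bullet> Nw t t1 t2 \<noteq> 0" if "t \<in> T" "t1 \<in> T" "t2 \<in> T" for t t1 t2
  proof -
    have "{x. Nw t t1 t2 \<bullet> x = 0} \<in> NN" unfolding NN_def using that by force
    then show ?thesis using c by (auto simp: inner_commute)
  qed
  have "generic c" unfolding generic_def
    using c1 fix_iff[OF vT(1) vT(2)] by blast
  moreover have "\<forall>t\<in>T. \<forall>t1\<in>T. \<forall>t2\<in>T. t1 \<noteq> t2 \<longrightarrow>
     (\<forall>s. \<not> (t1 (c - s *\<^sub>R nrm c t) = c - s *\<^sub>R nrm c t \<and> t2 (c - s *\<^sub>R nrm c t) = c - s *\<^sub>R nrm c t))"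
  proof (intro ballI impI allI notI)
    fix t t1 t2 s
    assume tt: "t \<in> T" "t1 \<in> T" "t2 \<in> T" "t1 \<noteq> t2"
      and fx: "t1 (c - s *\<^sub>R nrm c t) = c - s *\<^sub>R nrm c t \<and> t2 (c - s *\<^sub>R nrm c t) = c - s *\<^sub>R nrm c t"
    define v where "v = vT t"
    define v1 where "v1 = vT t1"
    define v2 where "v2 = vT t2"
    have v0: "v \<noteq> 0" "v1 \<noteq> 0" "v2 \<noteq> 0" using vT tt unfolding v_def v1_def v2_def by auto
    define l where "l = s * (2 * (c \<bullet> v) / (v \<bullet> v))"
    have p: "c - s *\<^sub>R nrm c t = c - l *\<^sub>R v"
      unfolding nrm_def l_def v_def using vT(2)[OF tt(1)] refl_diff[of c "vT t"] by (metis scaleR_scaleR)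
    have e1: "(c - l *\<^sub>R v) \<bullet> v1 = 0" using fx p fix_iff[OF v0(2)] vT(2)[OF tt(2)] unfolding v1_def by simp
    have e2: "(c - l *\<^sub>R v) \<bullet> v2 = 0" using fx p fix_iff[OF v0(3)] vT(2)[OF tt(3)] unfolding v2_def by simp
    have cv1: "c \<bullet> v1 = l * (v \<bullet> v1)" using e1 by (simp add: inner_diff_left)
    have cv2: "c \<bullet> v2 = l * (v \<bullet> v2)" using e2 by (simp add: inner_diff_left)
    have cw: "c \<bullet> w t t1 t2 = 0" unfolding w_def using cv1 cv2
      by (simp add: inner_diff_right v_def v1_def v2_def algebra_simps)
    show False
    proof (cases "w t t1 t2 \<noteq> 0")
      case True
      then have "c \<bullet> Nw t t1 t2 = 0" using cw unfolding Nw_def by simp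
      then show False using c2 tt by blast
    next
      case False
      then have w0: "(v \<bullet> v1) *\<^sub>R v2 = (v \<bullet> v2) *\<^sub>R v1" unfolding w_def v_def v1_def v2_def by simp
      show False
      proof (cases "v \<bullet> v1 = 0")
        case True
        then have "c \<bullet> v1 = 0" using cv1 by simp
        then show False using c1[OF tt(2)] unfolding v1_def by simp
      next
        case vv1: False
        have v2e: "v2 = ((v \<bullet> v2) / (v \<bullet> v1)) *\<^sub>R v1"
          using w0 vv1 by (metis (no_types, lifting) divide_inverse_commute scaleR_scaleR right_inverse scaleR_one)
        have k: "(v \<bullet> v2) / (v \<bullet> v1) \<noteq> 0" using v2e v0(3) by auto
        have "t2 = reflection v2" using vT(2)[OF tt(3)] unfolding v2_def .
        also have "\<dots> = reflection v1" using v2e refl_scale[OF k] by metis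
        also have "\<dots> = t1" using vT(2)[OF tt(2)] unfolding v1_def by simp
        finally show False using tt(4) by simp
      qed
    qed
  qed
  ultimately show ?thesis unfolding vgen_def by blast
qed

end


definition prodl :: "('a \<Rightarrow> 'a) list \<Rightarrow> 'a \<Rightarrow> 'a" where "prodl ws = foldr (\<circ>) ws id"

lemma prodl_Nil[simp]: "prodl [] = id" by (simp add: prodl_def)
lemma prodl_Cons[simp]: "prodl (s # ws) = s \<circ> prodl ws" by (simp add: prodl_def)
lemma prodl_append[simp]: "prodl (ws @ vs) = prodl ws \<circ> prodl vs"
  by (induction ws) (auto simp: comp_assoc)

locale rgrp = fgrp + assumes genT: "G = generated T"

locale rbase = rgrp + fixes c assumes vg: "vgen c"
begin

lemma gc: "generic c" using vg by (simp add: vgen_def)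

lemma vg2: "t \<in> T \<Longrightarrow> t1 \<in> T \<Longrightarrow> t2 \<in> T \<Longrightarrow> t1 (c - s *\<^sub>R nrm c t) = c - s *\<^sub>R nrm c t
   \<Longrightarrow> t2 (c - s *\<^sub>R nrm c t) = c - s *\<^sub>R nrm c t \<Longrightarrow> t1 = t2"
  using vg unfolding vgen_def by blast

lemma n_refl: assumes t: "t \<in> T" shows "nrm c t \<noteq> 0" "t = reflection (nrm c t)"
proof -
  obtain v where v: "v \<noteq> 0" "t = reflection v" using t by (blast elim: TE)
  have "c \<bullet> v \<noteq> 0" using gc t fix_iff[OF v] unfolding generic_def by blast
  then have k: "2 * (c \<bullet> v) / (v \<bullet> v) \<noteq> 0" using v(1) by simp
  have e: "nrm c t = (2 * (c \<bullet> v) / (v \<bullet> v)) *\<^sub>R v" unfolding nrm_def v(2) by (rule refl_diff)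
  show "nrm c t \<noteq> 0" using e k v(1) by simp
  have "reflection (nrm c t) = reflection v" unfolding e by (rule refl_scale[OF k])
  then show "t = reflection (nrm c t)" using v(2) by simp
qed

lemma c_n: assumes t: "t \<in> T" shows "c \<bullet> nrm c t = (nrm c t \<bullet> nrm c t) / 2" "0 < c \<bullet> nrm c t"
proof -
  have "t c \<bullet> t c = c \<bullet> c" using G_inner[OF T_G[OF t]] .
  then show e: "c \<bullet> nrm c t = (nrm c t \<bullet> nrm c t) / 2"
    unfolding nrm_def by (simp add: inner_diff_left inner_diff_right inner_commute)
  have "0 < nrm c t \<bullet> nrm c t" using n_refl(1)[OF t] by simp
  then show "0 < c \<bullet> nrm c t" using e by linarith
qed

lemma t_n: assumes t: "t \<in> T" shows "t (nrm c t) = - nrm c t"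
  unfolding nrm_def using T_invol[OF t] G_diff[OF T_G[OF t]] by simp

lemma sepc: assumes t: "t \<in> T" shows "t \<in> Sep c u \<longleftrightarrow> u \<bullet> nrm c t < 0"
proof -
  have "t \<in> Sep c u \<longleftrightarrow> (c \<bullet> nrm c t) * (u \<bullet> nrm c t) < 0" using sep_iff[OF t n_refl[OF t]] .
  also have "\<dots> \<longleftrightarrow> u \<bullet> nrm c t < 0" using c_n(2)[OF t] by (auto simp: mult_less_0_iff)
  finally show ?thesis .
qed

lemma fixc: assumes t: "t \<in> T" shows "t u = u \<longleftrightarrow> u \<bullet> nrm c t = 0"
  using fix_iff[OF n_refl[OF t]] .

lemma generic_iff: "generic u \<longleftrightarrow> (\<forall>t\<in>T. u \<bullet> nrm c t \<noteq> 0)"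
  unfolding generic_def using fixc by blast

definition S where "S = {s\<in>T. Sep c (s c) = {s}}"

lemma conjT_inj: assumes "s \<in> T" shows "inj_on (\<lambda>r. s \<circ> r \<circ> s) A"
proof (rule inj_onI)
  fix r r' assume "s \<circ> r \<circ> s = s \<circ> r' \<circ> s"
  then have H: "s (r (s z)) = s (r' (s z))" for z by (metis comp_apply)
  show "r = r'"
  proof
    fix y
    have "r y = s (s (r (s (s y))))" using T_invol[OF assms] by simp
    also have "\<dots> = s (s (r' (s (s y))))" using H by simp
    also have "\<dots> = r' y" using T_invol[OF assms] by simp
    finally show "r y = r' y" .
  qed
qed

lemma gen_orbit: "g \<in> G \<Longrightarrow> generic (g c)" using generic_act gc by blast

lemma T_words_aux:
  "\<forall>t\<in>T. card (Sep c (t c)) = k \<longrightarrow> (\<exists>ws. set ws \<subseteq> S \<and> prodl ws = t)"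
proof (induction k rule: less_induct)
  case (less k)
  show ?case
  proof (intro ballI impI)
    fix t assume t: "t \<in> T" and ck: "card (Sep c (t c)) = k"
    define A where "A = Sep c (t c)"
    define N where "N = nrm c t"
    define x where "x s = c - s *\<^sub>R N" for s :: real
    define tau where "tau t' = (c \<bullet> nrm c t') / (N \<bullet> nrm c t')" for t'
    have Afin: "finite A" unfolding A_def using T_fin sep_T finite_subset by blast
    have AT: "A \<subseteq> T" unfolding A_def using sep_T by blast
    have tc: "t c = c - N" unfolding N_def nrm_def by simp
    have F1: "t' \<in> A \<longleftrightarrow> c \<bullet> nrm c t' - N \<bullet> nrm c t' < 0" if "t' \<in> T" for t'
      unfolding A_def using sepc[OF that, of "t c"] tc by (simp add: inner_diff_left)
    have F2: "0 < N \<bullet> nrm c t' \<and> 0 < tau t' \<and> tau t' < 1" if "t' \<in> A" for t'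
    proof -
      have tT: "t' \<in> T" using that AT by blast
      have a: "0 < c \<bullet> nrm c t'" using c_n(2)[OF tT] .
      have b: "c \<bullet> nrm c t' < N \<bullet> nrm c t'" using F1[OF tT] that by simp
      then have "0 < N \<bullet> nrm c t'" using a by linarith
      then show ?thesis using a b unfolding tau_def by (simp add: divide_less_eq)
    qed
    have F3: "t' (x s) = x s \<longleftrightarrow> c \<bullet> nrm c t' - s * (N \<bullet> nrm c t') = 0" if "t' \<in> T" for t' s
      using fixc[OF that, of "x s"] unfolding x_def by (simp add: inner_diff_left)
    have F4: "t' (x (tau t')) = x (tau t')" if "t' \<in> A" for t'
    proof -
      have "N \<bullet> nrm c t' \<noteq> 0" using F2[OF that] by simp
      then show ?thesis using F3[of t' "tau t'"] that AT unfolding tau_def by auto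
    qed
    have F5: "t1 = t2" if "t1 \<in> A" "t2 \<in> A" "tau t1 = tau t2" for t1 t2
      using vg2[OF t, of t1 t2 "tau t1"] F4[OF that(1)] F4[OF that(2)] that AT
      unfolding x_def N_def by auto
    have F6: "s = tau t'" if "t' \<in> A" "t' (x s) = x s" for t' s
    proof -
      have nz: "N \<bullet> nrm c t' \<noteq> 0" using F2[OF that(1)] by simp
      have "c \<bullet> nrm c t' - s * (N \<bullet> nrm c t') = 0" using F3[of t' s] that AT by auto
      then show ?thesis using nz unfolding tau_def by (simp add: field_simps)
    qed
    have "0 < N \<bullet> N" using n_refl(1)[OF t] unfolding N_def by simp
    then have "c \<bullet> nrm c t - N \<bullet> nrm c t < 0" using c_n(1)[OF t] unfolding N_def by linarith
    then have tA: "t \<in> A" using F1[OF t] by simp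
    have F7: "tau t = 1 / 2"
    proof -
      have "0 < N \<bullet> N" using n_refl(1)[OF t] unfolding N_def by simp
      then show ?thesis unfolding tau_def N_def using c_n(1)[OF t] by simp
    qed
    have F8: "t \<circ> t' \<circ> t \<in> A" if "t' \<in> A" for t'
    proof -
      have eq: "Sep (t c) c = (\<lambda>r. t \<circ> r \<circ> t) ` Sep c (t c)"
        using sep_conjT[OF t, of c "t c"] T_invol[OF t] by simp
      have "t \<circ> t' \<circ> t \<in> (\<lambda>r. t \<circ> r \<circ> t) ` Sep c (t c)" using that unfolding A_def by (rule imageI)
      then have "t \<circ> t' \<circ> t \<in> Sep (t c) c" unfolding eq .
      then show ?thesis unfolding A_def using sep_sym[of "t c" c] by simp
    qed
    have F9: "t (x s) = x (1 - s)" for s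
    proof -
      have "t (x s) = t c - s *\<^sub>R t N" unfolding x_def using T_G[OF t] by (simp add: G_diff G_scale)
      also have "t N = - N" unfolding N_def by (rule t_n[OF t])
      finally show ?thesis unfolding x_def tc by (simp add: algebra_simps)
    qed
    have F10: "tau (t \<circ> t' \<circ> t) = 1 - tau t'" if "t' \<in> A" for t'
    proof -
      let ?tt = "t \<circ> t' \<circ> t"
      have ttA: "?tt \<in> A" using F8[OF that] .
      have "?tt (x (tau ?tt)) = x (tau ?tt)" using F4[OF ttA] .
      then have "t (t' (t (x (tau ?tt)))) = x (tau ?tt)" by simp
      then have "t (t (t' (t (x (tau ?tt))))) = t (x (tau ?tt))" by (rule arg_cong)
      then have "t' (t (x (tau ?tt))) = t (x (tau ?tt))" using T_invol[OF t] by simp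
      then have "t' (x (1 - tau ?tt)) = x (1 - tau ?tt)" using F9 by simp
      then have "1 - tau ?tt = tau t'" using F6[OF that] by blast
      then show ?thesis by simp
    qed
    show "\<exists>ws. set ws \<subseteq> S \<and> prodl ws = t"
    proof (cases "A = {t}")
      case True
      then have "t \<in> S" unfolding S_def A_def using t by blast
      then show ?thesis by (intro exI[of _ "[t]"]) simp
    next
      case False
      then obtain t2 where t2: "t2 \<in> A" "t2 \<noteq> t" using tA by blast
      have "tau t2 \<noteq> 1 / 2" using F5[OF t2(1) tA] t2(2) F7 by auto
      then have "\<exists>t'\<in>A. tau t' < 1 / 2"
      proof (cases "tau t2 < 1 / 2")
        case True then show ?thesis using t2 by blast
      next
        case False
        then have "tau (t \<circ> t2 \<circ> t) < 1 / 2" using F10[OF t2(1)] \<open>tau t2 \<noteq> 1 / 2\<close> by simp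
        then show ?thesis using F8[OF t2(1)] by blast
      qed
      then obtain t0 where t0: "t0 \<in> A" "tau t0 < 1 / 2" by blast
      have "\<exists>a\<in>A. \<forall>b\<in>A. (- tau) b \<le> (- tau) a" using max_exists[OF Afin] tA by blast
      then obtain t1 where t1A: "t1 \<in> A" and t1min: "\<forall>b\<in>A. tau t1 \<le> tau b" by auto
      define s1 where "s1 = tau t1"
      have "tau t1 \<le> tau t0" using t1min t0(1) by blast
      then have s1h: "s1 < 1 / 2" using t0(2) unfolding s1_def by simp
      have s1p: "0 < s1" using F2[OF t1A] unfolding s1_def by simp
      have t1T: "t1 \<in> T" using t1A AT by blast
      have t1t: "t1 \<noteq> t" using s1h F7 unfolding s1_def by auto
      have a': "0 < x s \<bullet> nrm c t'" if "0 \<le> s" "s \<le> s1" "t' \<in> T" "t' \<noteq> t1" for s t'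
      proof (rule ccontr)
        assume "\<not> 0 < x s \<bullet> nrm c t'"
        then have le: "c \<bullet> nrm c t' \<le> s * (N \<bullet> nrm c t')" unfolding x_def by (simp add: inner_diff_left)
        have cp: "0 < c \<bullet> nrm c t'" using c_n(2)[OF that(3)] .
        have sp: "0 < s" using le cp that(1) by (cases "s = 0") auto
        have "0 < s * (N \<bullet> nrm c t')" using le cp by linarith
        then have Np: "0 < N \<bullet> nrm c t'" by (rule zero_less_mult_pos[OF _ sp])
        have "tau t' \<le> s" unfolding tau_def using le Np by (simp add: pos_divide_le_eq mult.commute)
        then have ts: "tau t' \<le> s1" using that(2) by simp
        then have le2: "c \<bullet> nrm c t' \<le> s1 * (N \<bullet> nrm c t')"
          using Np unfolding tau_def by (simp add: pos_divide_le_eq)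
        have "s1 * (N \<bullet> nrm c t') < 1 * (N \<bullet> nrm c t')"
          using Np s1h by (intro mult_strict_right_mono) auto
        then have "c \<bullet> nrm c t' < N \<bullet> nrm c t'" using le2 by simp
        then have "t' \<in> A" using F1[OF that(3)] by simp
        then have "tau t1 \<le> tau t'" using t1min by blast
        then have "tau t' = s1" using ts unfolding s1_def by simp
        then have "t' = t1" using F5[OF \<open>t' \<in> A\<close> t1A] unfolding s1_def by simp
        then show False using that(4) by simp
      qed
      define m1 where "m1 = x s1"
      have t1m: "t1 m1 = m1" unfolding m1_def s1_def using F4[OF t1A] .
      have t1S: "t1 \<in> S" unfolding S_def
      proof (intro CollectI conjI t1T set_eqI iffI)
        fix t' assume t'S: "t' \<in> Sep c (t1 c)"
        have t'T: "t' \<in> T" using t'S sep_T by blast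
        have neg: "t1 c \<bullet> nrm c t' < 0" using sepc[OF t'T] t'S by simp
        show "t' \<in> {t1}"
        proof (rule ccontr)
          assume "t' \<notin> {t1}" then have ne: "t' \<noteq> t1" by simp
          define t'' where "t'' = t1 \<circ> t' \<circ> t1"
          have t''T: "t'' \<in> T" unfolding t''_def using T_conj_self[OF t1T t'T] .
          have t''ne: "t'' \<noteq> t1"
          proof
            assume H: "t'' = t1"
            have "t' y = t1 y" for y
            proof -
              have "t' y = t1 (t1 (t' (t1 (t1 y))))" using T_invol[OF t1T] by simp
              also have "\<dots> = t1 (t'' (t1 y))" unfolding t''_def by simp
              also have "\<dots> = t1 y" using H T_invol[OF t1T] by simp
              finally show ?thesis .
            qed
            then show False using ne by (simp add: fun_eq_iff)
          qed
          have "t'' (t1 (nrm c t')) = t1 (t' (nrm c t'))" unfolding t''_def using T_invol[OF t1T] by simp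
          also have "\<dots> = - t1 (nrm c t')" using t_n[OF t'T] G_lin[OF T_G[OF t1T]] by (simp add: linear_neg)
          finally have "reflection (nrm c t'') (t1 (nrm c t')) = - t1 (nrm c t')" using n_refl(2)[OF t''T] by simp
          then obtain k where k: "t1 (nrm c t') = k *\<^sub>R nrm c t''"
            using refl_neg[OF n_refl(1)[OF t''T]] by blast
          have "0 < m1 \<bullet> nrm c t'" unfolding m1_def using a'[OF _ _ t'T ne] s1p by simp
          moreover have "m1 \<bullet> t1 (nrm c t') = t1 m1 \<bullet> nrm c t'" using T_sa[OF t1T] by simp
          ultimately have "0 < m1 \<bullet> t1 (nrm c t')" using t1m by simp
          then have "0 < k * (m1 \<bullet> nrm c t'')" using k by simp
          moreover have "0 < m1 \<bullet> nrm c t''" unfolding m1_def using a'[OF _ _ t''T t''ne] s1p by simp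
          ultimately have kp: "0 < k" by (simp add: zero_less_mult_iff)
          have "t1 c \<bullet> nrm c t' = c \<bullet> t1 (nrm c t')" using T_sa[OF t1T] .
          also have "\<dots> = k * (c \<bullet> nrm c t'')" using k by simp
          finally have "0 < t1 c \<bullet> nrm c t'" using kp c_n(2)[OF t''T] by simp
          then show False using neg by simp
        qed
      next
        fix t' assume "t' \<in> {t1}"
        then have e: "t' = t1" by simp
        have "t1 c \<bullet> nrm c t1 = c \<bullet> t1 (nrm c t1)" using T_sa[OF t1T] .
        also have "\<dots> = - (c \<bullet> nrm c t1)" using t_n[OF t1T] by simp
        finally have "t1 c \<bullet> nrm c t1 < 0" using c_n(2)[OF t1T] by simp
        then show "t' \<in> Sep c (t1 c)" using sepc[OF t1T] e by simp
      qed
      define tt1 where "tt1 = t1 \<circ> t \<circ> t1"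
      have tt1T: "tt1 \<in> T" unfolding tt1_def using T_conj_self[OF t1T t] .
      have g1a: "generic (t c)" using gen_orbit[OF T_G[OF t]] .
      have g1b: "generic (t1 c)" using gen_orbit[OF T_G[OF t1T]] .
      have g1c: "generic (t (t1 c))" using generic_act[OF T_G[OF t] g1b] .
      have g1d: "generic (t1 (t (t1 c)))" using generic_act[OF T_G[OF t1T] g1c] .
      note g1 = g1a g1b g1c g1d
      have sep_t1: "Sep c (t1 c) = {t1}" using t1S unfolding S_def by blast
      have tt1t: "t \<circ> t1 \<circ> t \<in> A" using F8[OF t1A] .
      have ne2: "t1 \<noteq> t \<circ> t1 \<circ> t"
      proof
        assume H: "t1 = t \<circ> t1 \<circ> t"
        have "tau (t \<circ> t1 \<circ> t) = 1 - tau t1" using F10[OF t1A] .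
        then have "tau t1 = 1 - tau t1" unfolding H[symmetric] .
        then show False using s1h unfolding s1_def by simp
      qed
      have E1: "Sep c (t (t1 c)) = A - {t \<circ> t1 \<circ> t}"
      proof -
        have s1: "Sep c (t (t1 c)) = (A - Sep (t c) (t (t1 c))) \<union> (Sep (t c) (t (t1 c)) - A)"
          unfolding A_def using sep_trans[OF gc g1(1) g1(3)] .
        have s2: "Sep (t c) (t (t1 c)) = {t \<circ> t1 \<circ> t}" using sep_conjT[OF t, of c "t1 c"] sep_t1 by simp
        have s3: "{t \<circ> t1 \<circ> t} - A = {}" using tt1t by simp
        show ?thesis unfolding s1 s2 s3 by simp
      qed
      define Y where "Y = (\<lambda>r. t1 \<circ> r \<circ> t1) ` (A - {t \<circ> t1 \<circ> t})"
      have t1Y: "t1 \<in> Y"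
      proof -
        have "t1 = t1 \<circ> t1 \<circ> t1" using T_comp_self[OF t1T] by simp
        moreover have "t1 \<in> A - {t \<circ> t1 \<circ> t}" using t1A ne2 by simp
        ultimately show ?thesis unfolding Y_def by (rule image_eqI)
      qed
      have E2: "Sep c (tt1 c) = Y - {t1}"
      proof -
        have s1: "Sep c (t1 (t (t1 c))) = (Sep c (t1 c) - Sep (t1 c) (t1 (t (t1 c)))) \<union> (Sep (t1 c) (t1 (t (t1 c))) - Sep c (t1 c))"
          using sep_trans[OF gc g1(2) g1(4)] .
        have Yeq: "Sep (t1 c) (t1 (t (t1 c))) = Y"
          using sep_conjT[OF t1T, of c "t (t1 c)"] E1 unfolding Y_def by simp
        have "Sep c (t1 (t (t1 c))) = ({t1} - Y) \<union> (Y - {t1})" using s1 unfolding sep_t1 Yeq .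
        moreover have "({t1} - Y) \<union> (Y - {t1}) = Y - {t1}" using t1Y by blast
        ultimately show ?thesis unfolding tt1_def by simp
      qed
      have "card (Sep c (tt1 c)) = card Y - 1"
        unfolding E2 using Afin t1Y unfolding Y_def by (simp add: card_Diff_singleton)
      also have "card Y = card (A - {t \<circ> t1 \<circ> t})"
        unfolding Y_def using card_image[OF conjT_inj[OF t1T]] .
      also have "\<dots> = k - 1" using tt1t Afin ck unfolding A_def by (simp add: card_Diff_singleton)
      finally have ck2: "card (Sep c (tt1 c)) = k - 2" by simp
      have "card A > 0" using Afin tA by (auto simp: card_gt_0_iff)
      then have "k > 0" using ck unfolding A_def by simp
      then have "k - 2 < k" by simp
      then obtain ws where ws: "set ws \<subseteq> S" "prodl ws = tt1" using less.IH tt1T ck2 by blast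
      have "prodl ([t1] @ ws @ [t1]) = t"
        using ws(2) T_invol[OF t1T] unfolding tt1_def by (simp add: fun_eq_iff)
      moreover have "set ([t1] @ ws @ [t1]) \<subseteq> S" using ws(1) t1S by simp
      ultimately show ?thesis by blast
    qed
  qed
qed

lemma T_words: "t \<in> T \<Longrightarrow> \<exists>ws. set ws \<subseteq> S \<and> prodl ws = t"
  using T_words_aux by blast

lemma G_words: assumes "g \<in> G" shows "\<exists>ws. set ws \<subseteq> S \<and> prodl ws = g"
proof -
  have "g \<in> generated T" using assms genT by simp
  then show ?thesis
  proof (induction g rule: generated.induct)
    case gen_id then show ?case by (intro exI[of _ "[]"]) simp
  next
    case (gen_step r f)
    obtain wr where wr: "set wr \<subseteq> S" "prodl wr = r" using T_words[OF gen_step.hyps(1)] by blast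
    obtain wf where wf: "set wf \<subseteq> S" "prodl wf = f" using gen_step.IH by blast
    show ?case using wr wf by (intro exI[of _ "wr @ wf"]) simp
  qed
qed

end


fun gl :: "('a \<Rightarrow> 'a) list \<Rightarrow> ('a \<Rightarrow> 'a) list" where
  "gl [] = []"
| "gl (s # ws) = s # map (\<lambda>r. s \<circ> r \<circ> s) (gl ws)"

lemma length_gl[simp]: "length (gl ws) = length ws"
  by (induction ws) auto

context rbase begin

lemma prodl_G: "set ws \<subseteq> T \<Longrightarrow> prodl ws \<in> G"
  by (induction ws) (auto simp: idG G_comp T_G)

lemma S_T: "S \<subseteq> T" unfolding S_def by blast

lemma sep_gl: "set ws \<subseteq> S \<Longrightarrow> distinct (gl ws) \<Longrightarrow> Sep c (prodl ws c) = set (gl ws)"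
proof (induction ws)
  case Nil then show ?case by (simp add: sep_self)
next
  case (Cons s ws)
  have sS: "s \<in> S" using Cons.prems by simp
  have sT: "s \<in> T" using sS S_T by blast
  have wsS: "set ws \<subseteq> S" using Cons.prems by simp
  define Y where "Y = set (map (\<lambda>r. s \<circ> r \<circ> s) (gl ws))"
  have dist: "distinct (map (\<lambda>r. s \<circ> r \<circ> s) (gl ws))" "s \<notin> Y"
    using Cons.prems(2) unfolding Y_def by auto
  then have "distinct (gl ws)" by (simp add: distinct_map)
  then have IH: "Sep c (prodl ws c) = set (gl ws)" using Cons.IH wsS by blast
  have wG: "prodl ws \<in> G" using prodl_G wsS S_T by blast
  have g2: "generic (s c)" using gen_orbit[OF T_G[OF sT]] .
  have g3: "generic (s (prodl ws c))" using generic_act[OF T_G[OF sT] gen_orbit[OF wG]] .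
  have s1: "Sep c (s (prodl ws c)) = (Sep c (s c) - Sep (s c) (s (prodl ws c))) \<union> (Sep (s c) (s (prodl ws c)) - Sep c (s c))"
    using sep_trans[OF gc g2 g3] .
  have s2: "Sep (s c) (s (prodl ws c)) = Y"
    using sep_conjT[OF sT, of c "prodl ws c"] IH unfolding Y_def by simp
  have s3: "Sep c (s c) = {s}" using sS unfolding S_def by blast
  have "Sep c (s (prodl ws c)) = insert s Y" unfolding s1 s2 s3 using dist(2) by blast
  then show ?case unfolding Y_def by simp
qed

lemma del_one: "set ws \<subseteq> T \<Longrightarrow> r \<in> set (gl ws) \<Longrightarrow>
  \<exists>ws'. length ws' + 1 = length ws \<and> set ws' \<subseteq> set ws \<and> prodl ws = r \<circ> prodl ws'"
proof (induction ws arbitrary: r)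
  case Nil then show ?case by simp
next
  case (Cons s ws)
  have sT: "s \<in> T" using Cons.prems by simp
  show ?case
  proof (cases "r = s")
    case True then show ?thesis by (intro exI[of _ ws]) auto
  next
    case False
    then obtain r' where r': "r' \<in> set (gl ws)" "r = s \<circ> r' \<circ> s" using Cons.prems(2) by auto
    have wsT: "set ws \<subseteq> T" using Cons.prems(1) by simp
    obtain ws'' where w: "length ws'' + 1 = length ws" "set ws'' \<subseteq> set ws" "prodl ws = r' \<circ> prodl ws''"
      using Cons.IH[OF wsT r'(1)] by blast
    have "prodl (s # ws) = r \<circ> prodl (s # ws'')"
      using w(3) r'(2) T_invol[OF sT] by (simp add: fun_eq_iff)
    then show ?thesis using w by (intro exI[of _ "s # ws''"]) auto
  qed
qed

lemma del_two: "set ws \<subseteq> T \<Longrightarrow> \<not> distinct (gl ws) \<Longrightarrow>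
  \<exists>ws'. length ws' + 2 = length ws \<and> set ws' \<subseteq> set ws \<and> prodl ws' = prodl ws"
proof (induction ws)
  case Nil then show ?case by simp
next
  case (Cons s ws)
  have sT: "s \<in> T" using Cons.prems by simp
  have wsT: "set ws \<subseteq> T" using Cons.prems by simp
  have inj: "inj_on (\<lambda>r. s \<circ> r \<circ> s) (set (gl ws))" using conjT_inj[OF sT] .
  consider "s \<in> set (map (\<lambda>r. s \<circ> r \<circ> s) (gl ws))" | "\<not> distinct (gl ws)"
    using Cons.prems(2) inj by (auto simp: distinct_map)
  then show ?case
  proof cases
    case 1
    then obtain r where r: "r \<in> set (gl ws)" "s = s \<circ> r \<circ> s" by auto
    have "s \<circ> s \<circ> s = s \<circ> r \<circ> s" using r(2) T_comp_self[OF sT] by simp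
    then have "s = r" using conjT_inj[OF sT, of UNIV] by (auto dest: inj_onD)
    then have "s \<in> set (gl ws)" using r(1) by simp
    then obtain ws'' where w: "length ws'' + 1 = length ws" "set ws'' \<subseteq> set ws" "prodl ws = s \<circ> prodl ws''"
      using del_one[OF wsT] by blast
    have "prodl (s # ws) = prodl ws''" using w(3) T_invol[OF sT] by (simp add: fun_eq_iff)
    then show ?thesis using w by (intro exI[of _ ws'']) auto
  next
    case 2
    obtain ws'' where w: "length ws'' + 2 = length ws" "set ws'' \<subseteq> set ws" "prodl ws'' = prodl ws"
      using Cons.IH[OF wsT 2] by blast
    then show ?thesis by (intro exI[of _ "s # ws''"]) auto
  qed
qed

lemma deletion: "set ws \<subseteq> S \<Longrightarrow> Sep c (prodl ws c) = {} \<Longrightarrow> prodl ws = id"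
proof (induction "length ws" arbitrary: ws rule: less_induct)
  case less
  show ?case
  proof (cases "distinct (gl ws)")
    case True
    then have "set (gl ws) = {}" using sep_gl[OF less.prems(1)] less.prems(2) by simp
    then have "length ws = 0" using length_gl[of ws] by (metis length_0_conv set_empty)
    then show ?thesis by simp
  next
    case False
    obtain ws' where w: "length ws' + 2 = length ws" "set ws' \<subseteq> set ws" "prodl ws' = prodl ws"
      using del_two[OF _ False] less.prems(1) S_T by blast
    have "prodl ws' = id" using less.hyps[of ws'] w less.prems by auto
    then show ?thesis using w(3) by simp
  qed
qed

lemma SF: "g \<in> G \<Longrightarrow> Sep c (g c) = {} \<Longrightarrow> g = id"
  using G_words deletion by blast

definition Ch where "Ch = {u. \<forall>t\<in>T. 0 < u \<bullet> nrm c t}"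
definition K where "K = {u. \<forall>t\<in>T. 0 \<le> u \<bullet> nrm c t}"

lemma Ch_iff: "u \<in> Ch \<longleftrightarrow> generic u \<and> Sep c u = {}"
proof
  assume u: "u \<in> Ch"
  have "generic u" unfolding generic_iff using u unfolding Ch_def by force
  moreover have "Sep c u = {}"
  proof (rule ccontr)
    assume "Sep c u \<noteq> {}"
    then obtain t where t: "t \<in> Sep c u" by blast
    then have tT: "t \<in> T" using sep_T by blast
    then have "u \<bullet> nrm c t < 0" using sepc t by blast
    moreover have "0 < u \<bullet> nrm c t" using u tT unfolding Ch_def by blast
    ultimately show False by simp
  qed
  ultimately show "generic u \<and> Sep c u = {}" by blast
next
  assume u: "generic u \<and> Sep c u = {}"
  show "u \<in> Ch" unfolding Ch_def
  proof (intro CollectI ballI)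
    fix t assume t: "t \<in> T"
    have "u \<bullet> nrm c t \<noteq> 0" using u t unfolding generic_iff by blast
    moreover have "\<not> u \<bullet> nrm c t < 0" using u sepc[OF t] by blast
    ultimately show "0 < u \<bullet> nrm c t" by simp
  qed
qed

lemma c_Ch: "c \<in> Ch" unfolding Ch_def using c_n(2) by blast

lemma Ch_K: "u \<in> Ch \<Longrightarrow> u \<in> K" unfolding Ch_def K_def by (simp add: less_imp_le)

lemma K_generic_Ch: assumes "u \<in> K" "generic u" shows "u \<in> Ch"
  unfolding Ch_def
proof (intro CollectI ballI)
  fix t assume t: "t \<in> T"
  have "0 \<le> u \<bullet> nrm c t" using assms(1) t unfolding K_def by blast
  moreover have "u \<bullet> nrm c t \<noteq> 0" using assms(2) t unfolding generic_iff by blast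
  ultimately show "0 < u \<bullet> nrm c t" by simp
qed

lemma SF2: assumes u: "u \<in> Ch" and g: "g \<in> G" and gu: "g u \<in> Ch" shows "g = id"
proof -
  have gen_u: "generic u" "Sep c u = {}" using u Ch_iff by auto
  have gen_gu: "generic (g u)" "Sep c (g u) = {}" using gu Ch_iff by auto
  have s1: "Sep c (g c) = (Sep c (g u) - Sep (g u) (g c)) \<union> (Sep (g u) (g c) - Sep c (g u))"
    using sep_trans[OF gc gen_gu(1) gen_orbit[OF g]] .
  have "Sep (g u) (g c) = (\<lambda>t. g \<circ> t \<circ> inv g) ` Sep u c" using sep_conj[OF g] .
  also have "Sep u c = {}" using gen_u(2) sep_sym[of u c] by simp
  finally have s2: "Sep (g u) (g c) = {}" by simp
  have "Sep c (g c) = {}" unfolding s1 s2 gen_gu(2) by simp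
  then show ?thesis using SF[OF g] by blast
qed

lemma MT: assumes a: "a \<in> Ch" and h: "h \<in> G" and mx: "\<forall>g\<in>G. a \<bullet> g b \<le> a \<bullet> h b" shows "h b \<in> K"
  unfolding K_def
proof (intro CollectI ballI)
  fix t assume t: "t \<in> T"
  have "t \<circ> h \<in> G" using G_comp[OF T_G[OF t] h] .
  then have "a \<bullet> t (h b) \<le> a \<bullet> h b" using mx by fastforce
  then have "a \<bullet> reflection (nrm c t) (h b) \<le> a \<bullet> h b" using n_refl(2)[OF t] by simp
  moreover have "0 < a \<bullet> nrm c t" using a t unfolding Ch_def by blast
  ultimately show "0 \<le> h b \<bullet> nrm c t" using refl_max[OF n_refl(1)[OF t]] by blast
qed

lemma max_G: fixes f :: "('a \<Rightarrow> 'a) \<Rightarrow> real" shows "\<exists>h\<in>G. \<forall>g\<in>G. f g \<le> f h"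
  using max_exists[OF fin] idG by blast

lemma FD3Ch: assumes a: "a \<in> Ch" and b: "b \<in> Ch" and g: "g \<in> G" shows "a \<bullet> g b \<le> a \<bullet> b"
proof -
  obtain h where h: "h \<in> G" "\<forall>g\<in>G. a \<bullet> g b \<le> a \<bullet> h b" using max_G[of "\<lambda>h. a \<bullet> h b"] by blast
  have "h b \<in> K" using MT[OF a h(1) h(2)] .
  moreover have "generic (h b)" using generic_act[OF h(1)] b Ch_iff by blast
  ultimately have "h b \<in> Ch" by (rule K_generic_Ch)
  then have "h = id" using SF2[OF b h(1)] by blast
  then show ?thesis using h(2) g by force
qed

lemma FD3: assumes a: "a \<in> K" and b: "b \<in> K" and g: "g \<in> G" shows "a \<bullet> g b \<le> a \<bullet> b"
proof -
  have shift: "u + e *\<^sub>R c \<in> Ch" if "u \<in> K" "0 < e" for u e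
    unfolding Ch_def
  proof (intro CollectI ballI)
    fix t assume t: "t \<in> T"
    have "0 \<le> u \<bullet> nrm c t" using that(1) t unfolding K_def by blast
    moreover have "0 < e * (c \<bullet> nrm c t)" using that(2) c_n(2)[OF t] by simp
    ultimately show "0 < (u + e *\<^sub>R c) \<bullet> nrm c t" by (simp add: inner_add_left)
  qed
  define D where "D = a \<bullet> g b - a \<bullet> b"
  define P where "P = a \<bullet> g c + c \<bullet> g b - a \<bullet> c - c \<bullet> b"
  define Q where "Q = c \<bullet> g c - c \<bullet> c"
  have "\<forall>e>0. D + e * P + e * e * Q \<le> 0"
  proof (intro allI impI)
    fix e :: real assume e: "0 < e"
    have "(a + e *\<^sub>R c) \<bullet> g (b + e *\<^sub>R c) \<le> (a + e *\<^sub>R c) \<bullet> (b + e *\<^sub>R c)"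
      using FD3Ch[OF shift[OF a e] shift[OF b e] g] .
    moreover have "g (b + e *\<^sub>R c) = g b + e *\<^sub>R g c" using g by (simp add: G_add G_scale)
    ultimately have "(a + e *\<^sub>R c) \<bullet> (g b + e *\<^sub>R g c) \<le> (a + e *\<^sub>R c) \<bullet> (b + e *\<^sub>R c)" by simp
    then show "D + e * P + e * e * Q \<le> 0"
      unfolding D_def P_def Q_def by (simp add: inner_add_left inner_add_right algebra_simps)
  qed
  then have "D \<le> 0" by (rule poly_lim)
  then show ?thesis unfolding D_def by simp
qed

lemma FD2: assumes a: "a \<in> K" and g: "g \<in> G" and ga: "g a \<in> K" shows "g a = a"
proof -
  have "g a \<bullet> g a \<le> g a \<bullet> a" using FD3[OF ga a g] .
  moreover have "g a \<bullet> g a = a \<bullet> a" using G_inner[OF g] .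
  ultimately have "(g a - a) \<bullet> (g a - a) \<le> 0"
    by (simp add: inner_diff_left inner_diff_right inner_commute)
  then have "(g a - a) \<bullet> (g a - a) = 0" using inner_ge_zero[of "g a - a"] by linarith
  then show ?thesis by simp
qed

lemma FD1: "\<exists>g\<in>G. g u \<in> K"
proof -
  obtain h where h: "h \<in> G" "\<forall>g\<in>G. c \<bullet> g u \<le> c \<bullet> h u" using max_G[of "\<lambda>h. c \<bullet> h u"] by blast
  then show ?thesis using MT[OF c_Ch h(1) h(2)] by blast
qed

lemma K_orbit: assumes "a \<in> K" "b \<in> K" "orbit G a = orbit G b" shows "a = b"
proof -
  have "b \<in> orbit G a" using assms(3) orbit_self by metis
  then obtain g where g: "g \<in> G" "b = g a" by (rule orbit_memE)
  then show ?thesis using FD2[OF assms(1) g(1)] assms(2) by simp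
qed

lemma C_U_pt: assumes z: "z \<in> principal G" shows "z \<in> Qcell G x"
proof -
  obtain h where h: "h \<in> G" "\<forall>g\<in>G. c \<bullet> g z \<le> c \<bullet> h z" using max_G[of "\<lambda>h. c \<bullet> h z"] by blast
  have "h z \<in> K" using MT[OF c_Ch h(1) h(2)] .
  moreover have "generic (h z)" using generic_act[OF h(1) principal_generic[OF z]] .
  ultimately have hzC: "h z \<in> Ch" by (rule K_generic_Ch)
  obtain k where k: "k \<in> G" "\<forall>g\<in>G. h z \<bullet> g x \<le> h z \<bullet> k x" using max_G[of "\<lambda>k. h z \<bullet> k x"] by blast
  define q where "q = k x"
  have qK: "q \<in> K" unfolding q_def using MT[OF hzC k(1) k(2)] .
  have qx: "q \<in> orbit G x" unfolding q_def using orbit_act[OF k(1)] .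
  have "h z \<in> voronoi G q" unfolding vor_iff
  proof (intro ballI impI)
    fix p assume p: "p \<in> orbit G q" "p \<noteq> q"
    have "p \<in> orbit G x" using p(1) qx orbit_eq by metis
    then obtain k' where k': "k' \<in> G" "p = k' x" by (rule orbit_memE)
    have le: "h z \<bullet> p \<le> h z \<bullet> q" using k(2) k' unfolding q_def by blast
    show "p \<bullet> h z < q \<bullet> h z"
    proof (rule ccontr)
      assume "\<not> p \<bullet> h z < q \<bullet> h z"
      then have eq: "h z \<bullet> p = h z \<bullet> q" using le by (simp add: inner_commute)
      have "\<forall>g\<in>G. h z \<bullet> g x \<le> h z \<bullet> k' x" using k(2) eq k'(2) unfolding q_def by simp
      then have pK: "p \<in> K" using MT[OF hzC k'(1)] k'(2) by simp
      have "orbit G p = orbit G q" using p(1) orbit_eq by blast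
      then have "p = q" using K_orbit[OF pK qK] by blast
      then show False using p(2) by simp
    qed
  qed
  then have "inv h (h z) \<in> voronoi G (inv h q)" using vor_act[OF G_inv[OF h(1)]] by blast
  then have "z \<in> voronoi G (inv h q)" using G_invl[OF h(1)] by simp
  moreover have "inv h q \<in> orbit G x" using orbit_act[OF G_inv[OF h(1)], of q] qx orbit_eq by metis
  ultimately show ?thesis unfolding Qcell_iff by blast
qed

end


context rbase begin

lemma qdK: assumes u: "u \<in> K" and w: "w \<in> K" shows "qdist (orbit G u) (orbit G w) = norm (u - w)"
proof -
  obtain g where g: "g \<in> G" "qdist (orbit G u) (orbit G w) = norm (u - g w)" using qdist_attain2 by blast
  have "g w \<bullet> u \<le> w \<bullet> u" using FD3[OF u w g(1)] by (simp add: inner_commute)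
  then have "norm (u - w) \<le> norm (u - g w)" using norm_diff_le_from_inner[of "g w" w u] G_norm[OF g(1)] by simp
  moreover have "qdist (orbit G u) (orbit G w) \<le> norm (u - w)" using qdist_le[OF orbit_self orbit_self] .
  ultimately show ?thesis using g(2) by simp
qed

lemma C_A: "card (min_geodesics G (orbit G x) (orbit G y)) = 1"
proof -
  obtain g1 where g1: "g1 \<in> G" "g1 x \<in> K" using FD1 by blast
  obtain g2 where g2: "g2 \<in> G" "g2 y \<in> K" using FD1 by blast
  define a where "a = g1 x"
  define b where "b = g2 y"
  have oa: "orbit G a = orbit G x" unfolding a_def using orbit_gx[OF g1(1)] .
  have ob: "orbit G b = orbit G y" unfolding b_def using orbit_gx[OF g2(1)] .
  have aK: "a \<in> K" using g1(2) unfolding a_def .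
  have bK: "b \<in> K" using g2(2) unfolding b_def .
  define L where "L = norm (a - b)"
  have qd: "qdist (orbit G a) (orbit G b) = L" using qdK[OF aK bK] unfolding L_def .
  have L0: "0 \<le> L" unfolding L_def by simp
  define \<gamma>0 where "\<gamma>0 = (\<lambda>t. if t \<in> {0..L} then orbit G (a + (t / L) *\<^sub>R (b - a)) else {})"
  have m0: "(L, \<gamma>0) \<in> min_geodesics G (orbit G a) (orbit G b)"
    unfolding \<gamma>0_def by (rule seg_geodesic[OF orbit_self L_def qd])
  have uniq: "e = (L, \<gamma>0)" if e: "e \<in> min_geodesics G (orbit G a) (orbit G b)" for e
  proof -
    obtain L' \<gamma> where eq: "e = (L', \<gamma>)" by (cases e)
    have m: "(L', \<gamma>) \<in> min_geodesics G (orbit G a) (orbit G b)" using e eq by simp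
    note d = mg_dest[OF m]
    have rep: "\<exists>p. p \<in> K \<and> \<gamma> t = orbit G p" if "t \<in> {0..L'}" for t
    proof -
      have "\<gamma> t \<in> range (orbit G)" using bspec[OF d(2) that] unfolding quot_space_def .
      then obtain u where u: "\<gamma> t = orbit G u" by (rule rangeE)
      obtain g where g: "g \<in> G" "g u \<in> K" using FD1[of u] by (rule bexE)
      have "\<gamma> t = orbit G (g u)" using u orbit_gx[OF g(1), of u] by simp
      then show ?thesis using g(2) by (intro exI[of _ "g u"]) simp
    qed
    define \<rho> where "\<rho> t = (SOME p. p \<in> K \<and> \<gamma> t = orbit G p)" for t
    have \<rho>: "\<rho> t \<in> K \<and> \<gamma> t = orbit G (\<rho> t)" if "t \<in> {0..L'}" for t
      unfolding \<rho>_def using someI_ex[OF rep[OF that]] .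
    have L'0: "0 \<le> L'" using d(1) .
    have r0: "\<rho> 0 = a"
    proof -
      have h: "\<rho> 0 \<in> K \<and> \<gamma> 0 = orbit G (\<rho> 0)" using \<rho>[of 0] L'0 by simp
      have "orbit G (\<rho> 0) = orbit G a" using h d(5) by simp
      then show ?thesis using K_orbit[of "\<rho> 0" a] h aK by blast
    qed
    have rL: "\<rho> L' = b"
    proof -
      have h: "\<rho> L' \<in> K \<and> \<gamma> L' = orbit G (\<rho> L')" using \<rho>[of L'] L'0 by simp
      have "orbit G (\<rho> L') = orbit G b" using h d(6) by simp
      then show ?thesis using K_orbit[of "\<rho> L'" b] h bK by blast
    qed
    have rd: "norm (\<rho> s - \<rho> t) = \<bar>s - t\<bar>" if st: "s \<in> {0..L'}" "t \<in> {0..L'}" for s t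
    proof -
      have "qdist (\<gamma> s) (\<gamma> t) = \<bar>s - t\<bar>" using d(4) st by blast
      moreover have "qdist (\<gamma> s) (\<gamma> t) = norm (\<rho> s - \<rho> t)"
        using \<rho>[OF st(1)] \<rho>[OF st(2)] qdK by simp
      ultimately show ?thesis by simp
    qed
    have LL: "L' = L"
    proof -
      have "norm (\<rho> 0 - \<rho> L') = \<bar>0 - L'\<bar>" using rd[of 0 L'] L'0 by simp
      then show ?thesis using r0 rL L'0 unfolding L_def by simp
    qed
    have rt: "\<rho> t = a + (t / L) *\<^sub>R (b - a)" if t: "t \<in> {0..L}" for t
    proof (cases "L = 0")
      case True
      then have "t = 0" using t by simp
      then show ?thesis using r0 by simp
    next
      case False
      then have Lp: "0 < L" using L0 by simp
      have tL': "t \<in> {0..L'}" using t LL by simp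
      have d1: "dist a (\<rho> t) = t" using rd[of 0 t] tL' L'0 r0 t by (simp add: dist_norm)
      have d2: "dist (\<rho> t) b = L - t" using rd[of t L'] tL' L'0 rL LL t by (simp add: dist_norm)
      have "dist a b = L" unfolding L_def by (simp add: dist_norm)
      then have "between (a, b) (\<rho> t)" using d1 d2 by (simp add: between)
      then have "\<rho> t \<in> closed_segment a b" by (simp add: between_mem_segment)
      then obtain u where u: "0 \<le> u" "u \<le> 1" "\<rho> t = (1 - u) *\<^sub>R a + u *\<^sub>R b"
        unfolding closed_segment_def by blast
      have "a - \<rho> t = u *\<^sub>R (a - b)" using u(3) by (simp add: algebra_simps)
      then have "dist a (\<rho> t) = u * L" unfolding L_def using u(1) by (simp add: dist_norm)
      then have "u = t / L" using d1 Lp by (simp add: field_simps)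
      then show ?thesis using u(3) by (simp add: algebra_simps)
    qed
    have "\<gamma> = \<gamma>0"
    proof
      fix t show "\<gamma> t = \<gamma>0 t"
      proof (cases "t \<in> {0..L}")
        case True
        then have "\<gamma> t = orbit G (\<rho> t)" using \<rho>[of t] LL by simp
        then show ?thesis using rt[OF True] True unfolding \<gamma>0_def by simp
      next
        case False
        have "\<gamma> t = {}" using d(3) False LL by blast
        moreover have "\<gamma>0 t = {}" using False unfolding \<gamma>0_def by (simp only: if_False)
        ultimately show ?thesis by simp
      qed
    qed
    then show ?thesis using eq LL by simp
  qed
  have "min_geodesics G (orbit G a) (orbit G b) = {(L, \<gamma>0)}" using m0 uniq by blast
  then show ?thesis using oa ob by simp
qed

end

context rgrp begin

lemma C_U: "U"
proof -
  obtain c where c: "vgen c" using vgen_exists by blast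
  interpret r: rbase G c by unfold_locales (rule c)
  show ?thesis unfolding U_def using r.C_U_pt by blast
qed

lemma C_A: "card (min_geodesics G (orbit G x) (orbit G y)) = 1"
proof -
  obtain c where c: "vgen c" using vgen_exists by blast
  interpret r: rbase G c by unfold_locales (rule c)
  show ?thesis by (rule r.C_A)
qed

end

context fgrp begin

lemma C_genT: assumes "reflection_group G" shows "G = generated T"
proof -
  obtain R where R: "\<forall>r\<in>R. \<exists>v. v \<noteq> 0 \<and> r = reflection v" "G = generated R"
    using assms unfolding reflection_group_def by blast
  have "R \<subseteq> generated R" using gen_base by blast
  then have RG: "R \<subseteq> G" using R(2) by simp
  have RT: "R \<subseteq> T" using RG R(1) unfolding T_def by blast
  have "generated R \<subseteq> generated T" using gen_mono[OF RT] .
  moreover have "generated T \<subseteq> G" using gen_sub[OF T_sub] .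
  moreover have "G \<subseteq> generated R" using R(2) by simp
  ultimately show ?thesis by (meson equalityI subset_trans)
qed

lemma C_U': assumes "reflection_group G" shows "U"
proof -
  interpret rgrp G by unfold_locales (rule C_genT[OF assms])
  show ?thesis by (rule C_U)
qed

lemma C_A': assumes "reflection_group G" shows "\<forall>x y. card (min_geodesics G (orbit G x) (orbit G y)) = 1"
proof -
  interpret rgrp G by unfold_locales (rule C_genT[OF assms])
  show ?thesis using C_A by blast
qed

end

theorem lemma41:
  fixes G :: "('a::euclidean_space \<Rightarrow> 'a) set"
  assumes "finite G"
    and "\<forall>g\<in>G. orthogonal_transformation g"
    and "id \<in> G"
    and "\<forall>f\<in>G. \<forall>g\<in>G. f \<circ> g \<in> G"
    and "\<forall>g\<in>G. inv g \<in> G"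
  shows "((\<forall>x y. card (min_geodesics G (orbit G x) (orbit G y)) = 1)
            \<longleftrightarrow> (\<forall>x\<in>principal G. Qcell G x = principal G))
       \<and> ((\<forall>x\<in>principal G. Qcell G x = principal G) \<longleftrightarrow> reflection_group G)
       \<and> (reflection_group G \<longleftrightarrow> chi G = 1)"
proof -
  interpret fgrp G using assms by unfold_locales
  have AU: "(\<forall>x y. card (min_geodesics G (orbit G x) (orbit G y)) = 1) \<Longrightarrow> U" by (rule A_U)
  have UC: "U \<Longrightarrow> reflection_group G" by (rule U_C)
  have CU: "reflection_group G \<Longrightarrow> U" by (rule C_U')
  have CA: "reflection_group G \<Longrightarrow> (\<forall>x y. card (min_geodesics G (orbit G x) (orbit G y)) = 1)" by (rule C_A')
  have BU: "(\<forall>x\<in>principal G. Qcell G x = principal G) \<longleftrightarrow> U" by (rule B_iff_U)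
  have DU: "chi G = 1 \<longleftrightarrow> U" using U_chi chi_U by blast
  show ?thesis using AU UC CU CA BU DU by blast
qed


end
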